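(* Let $n\ge 1$. Then $\mathrm{tr}^f_n\big(f(x_n)\big)=0$ in $\mathrm{QWA}^f_{n-1}(A;z)$, where $f(x_n):=\sum_{i=0}^{l} f_i^{(n)}x_n^{\,l-i}\in\mathrm{QWA}^f_n(A;z)$.
   Context: Let $\Bbbk$ be a commutative ring, $z,t\in\Bbbk^\times$, and $A$ a symmetric Frobenius superalgebra over $\Bbbk$ with even trace $\mathrm{tr}$ (so $\mathrm{tr}(ab)=(-1)^{\bar a\bar b}\mathrm{tr}(ba)$), homogeneous basis $B_A$ and dual basis $\{b^\vee\}$ with $\mathrm{tr}(b^\vee c)=\delta_{b,c}$. Tensor factors of $A^{\otimes n}$ are numbered from right to left; for $a\in A$, $a^{(i)}:=1^{\otimes(n-i)}\otimes a\otimes 1^{\otimes(i-1)}$, and $\tau_i:=1^{\otimes(n-i-1)}\otimes\big(\sum_{b\in B_A}b\otimes b^\vee\big)\otimes1^{\otimes(i-1)}$. The quantum affine wreath product algebra $\mathrm{QAWA}_n(A;z)$ is the superalgebra generated by $A^{\otimes n}$, even invertible commuting $x_1,\dots,x_n$ and even $\sigma_1,\dots,\sigma_{n-1}$, subject to: $\sigma_i\sigma_j=\sigma_j\sigma_i$ for $|i-j|>1$; $\sigma_i\sigma_{i+1}\sigma_i=\sigma_{i+1}\sigma_i\sigma_{i+1}$; $\sigma_i^2=z\tau_i\sigma_i+1$; $\sigma_i\mathbf a=s_i(\mathbf a)\sigma_i$ for $\mathbf a\in A^{\otimes n}$ ($s_i$ superpermutes factors $i,i+1$); $\sigma_ix_j=x_j\sigma_i$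 for $j\ne i,i+1$; $\sigma_ix_i\sigma_i=x_{i+1}$; $x_i\mathbf a=\mathbf a x_i$. Fix $f(w)=f_0w^l+f_1w^{l-1}+\dots+f_l\in Z(A)_{\bar 0}[w]$ ($Z(A)_{\bar0}$ the even part of the supercenter) with $f_0=1$ and $f_l=t^2$. For $l\ge1$, the quantum cyclotomic wreath product algebra $\mathrm{QWA}^f_n(A;z)$ is the quotient of $\mathrm{QAWA}_n(A;z)$ by the two-sided ideal generated by $f(x_1)=\sum_i f_i^{(1)}x_1^{l-i}$; $\mathrm{QWA}^f_0:=\Bbbk$; if $l=0$ then $\mathrm{QWA}_n^f:=0$ for $n>0$. It is known that $\mathrm{QWA}^f_n$ embeds in $\mathrm{QWA}^f_{n+1}$ via $x_i\mapsto x_i$, $\sigma_j\mapsto\sigma_j$, $\mathbf a\mapsto 1\otimes\mathbf a$, and that there is a unique $(\mathrm{QWA}^f_n,\mathrm{QWA}^f_n)$-bimodule homomorphism $\mathrm{tr}^f_{n+1}:\mathrm{QWA}^f_{n+1}\to\mathrm{QWA}^f_n$ with $\mathrm{tr}^f_{n+1}(\sigma_n)=0$ and $\mathrm{tr}^f_{n+1}(a^{(n+1)}x_{n+1}^r)=\delta_{r,0}\mathrm{tr}(a)$ for $a\in A$, $0\le r<l$. *)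

theory Defs
  imports Main "HOL-Library.Poly_Mapping"
begin

datatype 'g word = Word "'g list"

fun word_letters :: "'g word \<Rightarrow> 'g list" where
  "word_letters (Word xs) = xs"

instantiation word :: (type) monoid_add
begin
definition zero_word :: "'g word" where "zero_word = Word []"
fun plus_word :: "'g word \<Rightarrow> 'g word \<Rightarrow> 'g word" where
  "plus_word (Word xs) (Word ys) = Word (xs @ ys)"
instance
proof
  fix a b c :: "'g word"
  show "a + b + c = a + (b + c)" by (cases a; cases b; cases c) simp
  show "0 + a = a" by (cases a) (simp add: zero_word_def)
  show "a + 0 = a" by (cases a) (simp add: zero_word_def)
qed
end

text \<open>The free associative \<open>'k\<close>-algebra on the alphabet \<open>'g\<close>: finitely supported
  functions from words to coefficients, with convolution product (a ring_1 instance
  of the Poly_Mapping library).\<close>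
type_synonym ('g, 'k) freealg = "'g word \<Rightarrow>\<^sub>0 'k"

definition fgen :: "'g \<Rightarrow> ('g, 'k::ring_1) freealg" where
  "fgen g = Poly_Mapping.single (Word [g]) 1"

definition fscal :: "'k \<Rightarrow> ('g, 'k::ring_1) freealg" where
  "fscal c = Poly_Mapping.single 0 c"

definition fsub :: "('g \<Rightarrow> bool) \<Rightarrow> ('g, 'k::ring_1) freealg set" where
  "fsub P = {p. \<forall>w\<in>Poly_Mapping.keys p. \<forall>g\<in>set (word_letters w). P g}"

inductive_set ideal_gen :: "('g, 'k::ring_1) freealg set \<Rightarrow> ('g, 'k) freealg set
    \<Rightarrow> ('g, 'k) freealg set" for V R where
  gen: "r \<in> R \<Longrightarrow> r \<in> ideal_gen V R"
| zero: "0 \<in> ideal_gen V R"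
| add: "p \<in> ideal_gen V R \<Longrightarrow> q \<in> ideal_gen V R \<Longrightarrow> p + q \<in> ideal_gen V R"
| mult: "u \<in> V \<Longrightarrow> v \<in> V \<Longrightarrow> p \<in> ideal_gen V R \<Longrightarrow> u * p * v \<in> ideal_gen V R"

text \<open>\<open>A\<close> is a ring (type \<open>'a\<close>) which is a \<open>'k\<close>-algebra via \<open>sc\<close>, with even part \<open>A0\<close>,
  odd part \<open>A1\<close>, even symmetric trace \<open>tr\<close>, finite homogeneous basis \<open>B\<close> (as a
  \<open>'k\<close>-module) and dual basis \<open>dual\<close> (\<open>tr (dual b * c) = \<delta>_{b,c}\<close>).\<close>

definition sgn_par :: "'a set \<Rightarrow> 'a \<Rightarrow> 'a \<Rightarrow> 'k::ring_1" where
  "sgn_par A1 a b = (if a \<in> A1 \<and> b \<in> A1 then -1 else 1)"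

definition sym_frob_superalg ::
  "('k::comm_ring_1 \<Rightarrow> 'a::ring_1 \<Rightarrow> 'a) \<Rightarrow> 'a set \<Rightarrow> 'a set \<Rightarrow> ('a \<Rightarrow> 'k) \<Rightarrow> 'a set
     \<Rightarrow> ('a \<Rightarrow> 'a) \<Rightarrow> bool" where
  "sym_frob_superalg sc A0 A1 tr B dual \<longleftrightarrow>
     \<comment> \<open>\<open>'k\<close>-algebra structure\<close>
     (\<forall>c a b. sc c (a + b) = sc c a + sc c b) \<and>
     (\<forall>c d a. sc (c + d) a = sc c a + sc d a) \<and>
     (\<forall>c d a. sc (c * d) a = sc c (sc d a)) \<and>
     (\<forall>a. sc 1 a = a) \<and>
     (\<forall>c a b. sc c (a * b) = sc c a * b \<and> sc c (a * b) = a * sc c b) \<and>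
     \<comment> \<open>super grading\<close>
     (\<forall>i\<in>{A0, A1}. 0 \<in> i \<and> (\<forall>a\<in>i. \<forall>b\<in>i. a + b \<in> i) \<and> (\<forall>c. \<forall>a\<in>i. sc c a \<in> i)) \<and>
     (\<forall>a. \<exists>a0\<in>A0. \<exists>a1\<in>A1. a = a0 + a1) \<and> A0 \<inter> A1 = {0} \<and>
     1 \<in> A0 \<and>
     (\<forall>a\<in>A0. \<forall>b\<in>A0. a * b \<in> A0) \<and> (\<forall>a\<in>A0. \<forall>b\<in>A1. a * b \<in> A1) \<and>
     (\<forall>a\<in>A1. \<forall>b\<in>A0. a * b \<in> A1) \<and> (\<forall>a\<in>A1. \<forall>b\<in>A1. a * b \<in> A0) \<and>
     \<comment> \<open>even symmetric \<open>'k\<close>-linear trace\<close>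
     (\<forall>a b. tr (a + b) = tr a + tr b) \<and> (\<forall>c a. tr (sc c a) = c * tr a) \<and>
     (\<forall>a\<in>A1. tr a = 0) \<and>
     (\<forall>a\<in>A0 \<union> A1. \<forall>b\<in>A0 \<union> A1. tr (a * b) = sgn_par A1 a b * tr (b * a)) \<and>
     \<comment> \<open>finite homogeneous basis of the \<open>'k\<close>-module \<open>A\<close>\<close>
     finite B \<and> B \<subseteq> A0 \<union> A1 \<and>
     (\<forall>a. \<exists>c. a = (\<Sum>b\<in>B. sc (c b) b)) \<and>
     (\<forall>c. (\<Sum>b\<in>B. sc (c b) b) = 0 \<longrightarrow> (\<forall>b\<in>B. c b = 0)) \<and>
     \<comment> \<open>dual basis\<close>
     (\<forall>b\<in>B. \<forall>c\<in>B. tr (dual b * c) = (if b = c then 1 else 0))"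

definition even_supercentral :: "'a set \<Rightarrow> 'a::ring_1 \<Rightarrow> bool" where
  "even_supercentral A0 c \<longleftrightarrow> c \<in> A0 \<and> (\<forall>a. c * a = a * c)"

text \<open>Generators: \<open>E i a\<close> is \<open>a\<^sup>(\<^sup>i\<^sup>)\<close>, \<open>X i\<close> is \<open>x_i\<close>, \<open>Xi i\<close> is \<open>x_i\<^sup>-\<^sup>1\<close>, \<open>S i\<close> is \<open>\<sigma>_i\<close>.\<close>
datatype 'a qgen = E nat 'a | X nat | Xi nat | S nat

fun valid_gen :: "nat \<Rightarrow> 'a qgen \<Rightarrow> bool" where
  "valid_gen n (E i a) = (1 \<le> i \<and> i \<le> n)"
| "valid_gen n (X i) = (1 \<le> i \<and> i \<le> n)"
| "valid_gen n (Xi i) = (1 \<le> i \<and> i \<le> n)"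
| "valid_gen n (S i) = (1 \<le> i \<and> i < n)"

type_synonym ('a, 'k) qfree = "('a qgen, 'k) freealg"

text \<open>Note that level
  \<open>n - 1\<close> is literally contained in level \<open>n\<close>, which realises the embedding
  \<open>x_i \<mapsto> x_i, \<sigma>_j \<mapsto> \<sigma>_j, \<aa> \<mapsto> 1 \<otimes> \<aa>\<close> (factors are numbered from the right).\<close>
definition Vn :: "nat \<Rightarrow> ('a, 'k::ring_1) qfree set" where
  "Vn n = fsub (valid_gen n)"

definition gE :: "nat \<Rightarrow> 'a \<Rightarrow> ('a, 'k::ring_1) qfree" where "gE i a = fgen (E i a)"
definition gX :: "nat \<Rightarrow> ('a, 'k::ring_1) qfree" where "gX i = fgen (X i)"
definition gXi :: "nat \<Rightarrow> ('a, 'k::ring_1) qfree" where "gXi i = fgen (Xi i)"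
definition gS :: "nat \<Rightarrow> ('a, 'k::ring_1) qfree" where "gS i = fgen (S i)"

definition tau :: "'a set \<Rightarrow> ('a \<Rightarrow> 'a) \<Rightarrow> nat \<Rightarrow> ('a, 'k::ring_1) qfree" where
  "tau B dual i = (\<Sum>b\<in>B. gE (Suc i) b * gE i (dual b))"

definition fpoly :: "(nat \<Rightarrow> 'a) \<Rightarrow> nat \<Rightarrow> nat \<Rightarrow> ('a, 'k::ring_1) qfree" where
  "fpoly fc l i = (\<Sum>j\<le>l. gE i (fc j) * gX i ^ (l - j))"

text \<open>The subalgebra
  \<open>A\<^sup>\<otimes>\<^sup>n\<close> is presented by the maps \<open>a \<mapsto> a\<^sup>(\<^sup>i\<^sup>)\<close> being unital \<open>'k\<close>-algebra maps whose images
  supercommute for different \<open>i\<close>; the relation \<open>\<sigma>_i \<aa> = s_i(\<aa>) \<sigma>_i\<close> is imposed on these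
  algebra generators (which is equivalent, since \<open>s_i\<close> is an algebra automorphism).\<close>
definition qawa_rels ::
  "('k::comm_ring_1 \<Rightarrow> 'a::ring_1 \<Rightarrow> 'a) \<Rightarrow> 'a set \<Rightarrow> 'a set \<Rightarrow> 'a set \<Rightarrow> ('a \<Rightarrow> 'a) \<Rightarrow> 'k
     \<Rightarrow> nat \<Rightarrow> ('a, 'k) qfree set" where
  "qawa_rels sc A0 A1 B dual z n =
     {gE i (a + b) - (gE i a + gE i b) | i a b. 1 \<le> i \<and> i \<le> n}
   \<union> {gE i (sc c a) - fscal c * gE i a | i c a. 1 \<le> i \<and> i \<le> n}
   \<union> {gE i 1 - 1 | i. 1 \<le> i \<and> i \<le> n}
   \<union> {gE i a * gE i b - gE i (a * b) | i a b. 1 \<le> i \<and> i \<le> n}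
   \<union> {gE i a * gE j b - fscal (sgn_par A1 a b) * gE j b * gE i a | i j a b.
        1 \<le> i \<and> i \<le> n \<and> 1 \<le> j \<and> j \<le> n \<and> i \<noteq> j \<and> a \<in> A0 \<union> A1 \<and> b \<in> A0 \<union> A1}
   \<union> {gX i * gXi i - 1 | i. 1 \<le> i \<and> i \<le> n}
   \<union> {gXi i * gX i - 1 | i. 1 \<le> i \<and> i \<le> n}
   \<union> {gX i * gX j - gX j * gX i | i j. 1 \<le> i \<and> i \<le> n \<and> 1 \<le> j \<and> j \<le> n}
   \<union> {gX i * gE j a - gE j a * gX i | i j a. 1 \<le> i \<and> i \<le> n \<and> 1 \<le> j \<and> j \<le> n}
   \<union> {gS i * gS j - gS j * gS i | i j. 1 \<le> i \<and> i < n \<and> 1 \<le> j \<and> j < n \<and> (i + 1 < j \<or> j + 1 < i)}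
   \<union> {gS i * gS (Suc i) * gS i - gS (Suc i) * gS i * gS (Suc i) | i. 1 \<le> i \<and> Suc i < n}
   \<union> {gS i * gS i - (fscal z * tau B dual i * gS i + 1) | i. 1 \<le> i \<and> i < n}
   \<union> {gS i * gE i a - gE (Suc i) a * gS i | i a. 1 \<le> i \<and> i < n}
   \<union> {gS i * gE (Suc i) a - gE i a * gS i | i a. 1 \<le> i \<and> i < n}
   \<union> {gS i * gE j a - gE j a * gS i | i j a. 1 \<le> i \<and> i < n \<and> 1 \<le> j \<and> j \<le> n \<and> j \<noteq> i \<and> j \<noteq> Suc i}
   \<union> {gS i * gX j - gX j * gS i | i j. 1 \<le> i \<and> i < n \<and> 1 \<le> j \<and> j \<le> n \<and> j \<noteq> i \<and> j \<noteq> Suc i}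
   \<union> {gS i * gX i * gS i - gX (Suc i) | i. 1 \<le> i \<and> i < n}"

text \<open>Relations of \<open>QWA^f_n(A;z)\<close>: those of \<open>QAWA_n\<close> plus \<open>f(x_1)\<close> when \<open>n \<ge> 1\<close>
  (for \<open>n = 0\<close> this gives \<open>'k\<close>; for \<open>l = 0\<close>, \<open>n \<ge> 1\<close> it gives \<open>0\<close> since then \<open>f(x_1) = 1\<close>).\<close>
definition qwa_ideal ::
  "('k::comm_ring_1 \<Rightarrow> 'a::ring_1 \<Rightarrow> 'a) \<Rightarrow> 'a set \<Rightarrow> 'a set \<Rightarrow> 'a set \<Rightarrow> ('a \<Rightarrow> 'a) \<Rightarrow> 'k
     \<Rightarrow> (nat \<Rightarrow> 'a) \<Rightarrow> nat \<Rightarrow> nat \<Rightarrow> ('a, 'k) qfree set" where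
  "qwa_ideal sc A0 A1 B dual z fc l n =
     ideal_gen (Vn n) (qawa_rels sc A0 A1 B dual z n \<union> (if 1 \<le> n then {fpoly fc l 1} else {}))"

definition qwa_eq ::
  "('k::comm_ring_1 \<Rightarrow> 'a::ring_1 \<Rightarrow> 'a) \<Rightarrow> 'a set \<Rightarrow> 'a set \<Rightarrow> 'a set \<Rightarrow> ('a \<Rightarrow> 'a) \<Rightarrow> 'k
     \<Rightarrow> (nat \<Rightarrow> 'a) \<Rightarrow> nat \<Rightarrow> nat \<Rightarrow> ('a, 'k) qfree \<Rightarrow> ('a, 'k) qfree \<Rightarrow> bool" where
  "qwa_eq sc A0 A1 B dual z fc l n p q \<longleftrightarrow>
     p \<in> Vn n \<and> q \<in> Vn n \<and> p - q \<in> qwa_ideal sc A0 A1 B dual z fc l n"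

text \<open>\<open>T\<close> (acting on representatives) induces a \<open>(QWA^f_{n-1}, QWA^f_{n-1})\<close>-bimodule
  homomorphism \<open>QWA^f_n \<rightarrow> QWA^f_{n-1}\<close> with the defining properties of \<open>tr^f_n\<close>:
  \<open>tr^f_n(\<sigma>_{n-1}) = 0\<close> (when \<open>n \<ge> 2\<close>) and \<open>tr^f_n(a\<^sup>(\<^sup>n\<^sup>) x_n^r) = \<delta>_{r,0} tr(a)\<close> for \<open>0 \<le> r < l\<close>.\<close>
definition is_qwa_trace ::
  "('k::comm_ring_1 \<Rightarrow> 'a::ring_1 \<Rightarrow> 'a) \<Rightarrow> 'a set \<Rightarrow> 'a set \<Rightarrow> ('a \<Rightarrow> 'k) \<Rightarrow> 'a set
     \<Rightarrow> ('a \<Rightarrow> 'a) \<Rightarrow> 'k \<Rightarrow> (nat \<Rightarrow> 'a) \<Rightarrow> nat \<Rightarrow> nat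
     \<Rightarrow> (('a, 'k) qfree \<Rightarrow> ('a, 'k) qfree) \<Rightarrow> bool" where
  "is_qwa_trace sc A0 A1 tr B dual z fc l n T \<longleftrightarrow>
     (let eqn = qwa_eq sc A0 A1 B dual z fc l n;
          eqm = qwa_eq sc A0 A1 B dual z fc l (n - 1) in
       (\<forall>p\<in>Vn n. T p \<in> Vn (n - 1)) \<and>
       (\<forall>p q. eqn p q \<longrightarrow> eqm (T p) (T q)) \<and>
       (\<forall>p\<in>Vn n. \<forall>q\<in>Vn n. eqm (T (p + q)) (T p + T q)) \<and>
       (\<forall>u\<in>Vn (n - 1). \<forall>p\<in>Vn n. eqm (T (u * p)) (u * T p) \<and> eqm (T (p * u)) (T p * u)) \<and>
       (2 \<le> n \<longrightarrow> eqm (T (gS (n - 1))) 0) \<and>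
       (\<forall>a r. r < l \<longrightarrow> eqm (T (gE n a * gX n ^ r)) (if r = 0 then fscal (tr a) else 0)))"

end

theory Submission
  imports Defs
begin

lemma fscal_comm: "fscal c * (p::('g,'k::comm_ring_1) freealg) = p * fscal c"
  unfolding fscal_def
proof(transfer fixing: c)
  fix p :: "'g word \<Rightarrow> 'k"
  show "prod_fun (\<lambda>k'. c when 0 = k') p = prod_fun p (\<lambda>k'. c when 0 = k')"
  proof
    fix x :: "'g word"
    have e1: "(\<lambda>a. (if 0 = a then c else 0) * (\<Sum>q. if x = a + q then p q else 0)) = (\<lambda>a. if a = 0 then c * p x else 0)"
    proof
      fix a :: "'g word"
      show "(if 0 = a then c else 0) * (\<Sum>q. if x = a + q then p q else 0) = (if a = 0 then c * p x else 0)"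
      proof (cases "a = 0")
        case True
        have "(\<lambda>q. if x = q then p q else 0) = (\<lambda>q. if q = x then p x else 0)" by auto
        then show ?thesis using True by simp
      qed simp
    qed
    have e2: "(\<lambda>l. p l * (\<Sum>q. if x = l + q then if 0 = q then c else 0 else 0)) = (\<lambda>l. if l = x then p x * c else 0)"
    proof
      fix a :: "'g word"
      have "(\<lambda>q. if x = a + q then if 0 = q then c else 0 else 0) = (\<lambda>q. if q = 0 then (if x = a then c else 0) else 0)"
        by (cases a) (auto simp: fun_eq_iff zero_word_def)
      then show "p a * (\<Sum>q. if x = a + q then if 0 = q then c else 0 else 0) = (if a = x then p x * c else 0)"
        by (simp only:) auto
    qed
    show "prod_fun (\<lambda>k'. c when 0 = k') p x = prod_fun p (\<lambda>k'. c when 0 = k') x"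
      unfolding prod_fun_def when_def by (simp only: e1 e2) (simp add: mult.commute)
  qed
qed

lemma fscal_1[simp]: "fscal 1 = (1::('g,'k::comm_ring_1) freealg)"
  by (simp add: fscal_def)
lemma fscal_mult: "fscal (a * b) = (fscal a * fscal b::('g,'k::comm_ring_1) freealg)"
  by (simp add: fscal_def mult_single)
lemma fscal_uminus: "fscal (- a) = - (fscal a::('g,'k::comm_ring_1) freealg)"
  by (simp add: fscal_def single_uminus)
lemma fscal_0[simp]: "fscal 0 = (0::('g,'k::comm_ring_1) freealg)"
  by (simp add: fscal_def)

lemma word_letters_plus: "word_letters (a + b) = word_letters a @ word_letters b"
  by (cases a; cases b) simp
lemma word_letters_zero[simp]: "word_letters 0 = []"
  by (simp add: zero_word_def)

lemma fsub_zero[simp]: "0 \<in> fsub P" by (simp add: fsub_def)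
lemma fsub_one[simp]: "1 \<in> fsub P" by (simp add: fsub_def)
lemma fsub_fscal[simp]: "fscal c \<in> fsub P" by (simp add: fsub_def fscal_def)
lemma fsub_add[simp]: "p \<in> fsub P \<Longrightarrow> q \<in> fsub P \<Longrightarrow> p + q \<in> fsub P"
proof -
  assume a: "p \<in> fsub P" "q \<in> fsub P"
  have "w \<in> Poly_Mapping.keys p \<or> w \<in> Poly_Mapping.keys q" if "w \<in> Poly_Mapping.keys (p + q)" for w
    using keys_add[of p q] that by auto
  then show ?thesis using a unfolding fsub_def by blast
qed
lemma fsub_uminus[simp]: "p \<in> fsub P \<Longrightarrow> - p \<in> fsub P"
  unfolding fsub_def by simp
lemma fsub_diff[simp]: "p \<in> fsub P \<Longrightarrow> q \<in> fsub P \<Longrightarrow> p - q \<in> fsub P"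
proof -
  assume a: "p \<in> fsub P" "q \<in> fsub P"
  have "w \<in> Poly_Mapping.keys p \<or> w \<in> Poly_Mapping.keys q" if "w \<in> Poly_Mapping.keys (p - q)" for w
    using keys_diff[of p q] that by auto
  then show ?thesis using a unfolding fsub_def by blast
qed
lemma fsub_mult[simp]: "p \<in> fsub P \<Longrightarrow> q \<in> fsub P \<Longrightarrow> p * q \<in> fsub P"
  unfolding fsub_def using keys_mult by (fastforce simp: word_letters_plus)
lemma fsub_power[simp]: "p \<in> fsub P \<Longrightarrow> p ^ e \<in> fsub P"
  by (induction e) simp_all
lemma fsub_sum[simp]: "(\<And>x. x \<in> SS \<Longrightarrow> f x \<in> fsub P) \<Longrightarrow> sum f SS \<in> fsub P"
  by (induction SS rule: infinite_finite_induct) simp_all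
lemma fsub_fgen[simp]: "P g \<Longrightarrow> fgen g \<in> fsub P"
  by (simp add: fsub_def fgen_def)
lemma fsub_mono: "(\<And>g. P g \<Longrightarrow> Q g) \<Longrightarrow> p \<in> fsub P \<Longrightarrow> p \<in> fsub Q"
  unfolding fsub_def by blast

lemma Vn_gE[simp]: "1 \<le> i \<Longrightarrow> i \<le> k \<Longrightarrow> gE i a \<in> Vn k"
  by (simp add: Vn_def gE_def)
lemma Vn_gX[simp]: "1 \<le> i \<Longrightarrow> i \<le> k \<Longrightarrow> gX i \<in> Vn k"
  by (simp add: Vn_def gX_def)
lemma Vn_gS[simp]: "1 \<le> i \<Longrightarrow> i < k \<Longrightarrow> gS i \<in> Vn k"
  by (simp add: Vn_def gS_def)
lemma Vn_closed[simp]: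
  "0 \<in> Vn k" "1 \<in> Vn k" "fscal c \<in> Vn k"
  "p \<in> Vn k \<Longrightarrow> q \<in> Vn k \<Longrightarrow> p + q \<in> Vn k"
  "p \<in> Vn k \<Longrightarrow> q \<in> Vn k \<Longrightarrow> p - q \<in> Vn k"
  "p \<in> Vn k \<Longrightarrow> q \<in> Vn k \<Longrightarrow> p * q \<in> Vn k"
  "p \<in> Vn k \<Longrightarrow> - p \<in> Vn k"
  "p \<in> Vn k \<Longrightarrow> p ^ e \<in> Vn k"
  by (simp_all add: Vn_def)
lemma Vn_sum[simp]: "(\<And>x. x \<in> SS \<Longrightarrow> f x \<in> Vn k) \<Longrightarrow> sum f SS \<in> Vn k"
  by (simp add: Vn_def)
lemma Vn_tau[simp]: "1 \<le> i \<Longrightarrow> i < k \<Longrightarrow> tau B dual i \<in> Vn k"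
  by (simp add: tau_def)
lemma Vn_fpoly[simp]: "1 \<le> i \<Longrightarrow> i \<le> k \<Longrightarrow> fpoly fc l i \<in> Vn k"
  by (simp add: fpoly_def)
lemma valid_gen_mono: "valid_gen k g \<Longrightarrow> k \<le> k' \<Longrightarrow> valid_gen k' g"
  by (cases g) auto
lemma Vn_mono: "p \<in> Vn k \<Longrightarrow> k \<le> k' \<Longrightarrow> p \<in> Vn k'"
  unfolding Vn_def using fsub_mono[of "valid_gen k" "valid_gen k'" p] valid_gen_mono by blast

lemma ig_left: "u \<in> V \<Longrightarrow> 1 \<in> V \<Longrightarrow> p \<in> ideal_gen V R \<Longrightarrow> u * p \<in> ideal_gen V R"
  using ideal_gen.mult[of u V 1 p R] by simp
lemma ig_right: "v \<in> V \<Longrightarrow> 1 \<in> V \<Longrightarrow> p \<in> ideal_gen V R \<Longrightarrow> p * v \<in> ideal_gen V R"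
  using ideal_gen.mult[of 1 V v p R] by simp

definition EQ where "EQ sc A0 A1 B dual z fc l k p q = qwa_eq sc A0 A1 B dual z fc l k p q"

context
  fixes sc :: "'k::comm_ring_1 \<Rightarrow> 'a::ring_1 \<Rightarrow> 'a"
    and A0 A1 B :: "'a set" and dual :: "'a \<Rightarrow> 'a"
    and z :: 'k and fc :: "nat \<Rightarrow> 'a" and l :: nat
begin

abbreviation "I k \<equiv> qwa_ideal sc A0 A1 B dual z fc l k"
abbreviation "Q k \<equiv> EQ sc A0 A1 B dual z fc l k"

lemma I_left: "u \<in> Vn k \<Longrightarrow> p \<in> I k \<Longrightarrow> u * p \<in> I k"
  unfolding qwa_ideal_def by (rule ig_left) simp_all
lemma I_right: "u \<in> Vn k \<Longrightarrow> p \<in> I k \<Longrightarrow> p * u \<in> I k"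
  unfolding qwa_ideal_def by (rule ig_right) simp_all
lemma I_add: "p \<in> I k \<Longrightarrow> q \<in> I k \<Longrightarrow> p + q \<in> I k"
  unfolding qwa_ideal_def by (rule ideal_gen.add)
lemma I_0: "0 \<in> I k"
  unfolding qwa_ideal_def by (rule ideal_gen.zero)
lemma I_uminus: "p \<in> I k \<Longrightarrow> - p \<in> I k"
  using I_left[of "-1" k p] by simp
lemma I_diff: "p \<in> I k \<Longrightarrow> q \<in> I k \<Longrightarrow> p - q \<in> I k"
proof -
  assume a: "p \<in> I k" "q \<in> I k"
  have "p + - q \<in> I k" by (rule I_add[OF a(1) I_uminus[OF a(2)]])
  then show ?thesis by simp
qed
lemma I_rel: "r \<in> qawa_rels sc A0 A1 B dual z k \<Longrightarrow> r \<in> I k"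
  unfolding qwa_ideal_def by (rule ideal_gen.gen) simp

lemma Q_def': "Q k p q \<longleftrightarrow> p \<in> Vn k \<and> q \<in> Vn k \<and> p - q \<in> I k"
  by (simp add: EQ_def qwa_eq_def)

lemma Q_refl: "p \<in> Vn k \<Longrightarrow> Q k p p"
  by (simp add: Q_def' I_0)
lemma Q_sym: "Q k p q \<Longrightarrow> Q k q p"
proof -
  assume a: "Q k p q"
  have "q - p = - (p - q)" by simp
  then show ?thesis using a I_uminus[of "p - q" k] unfolding Q_def' by simp
qed
lemma Q_trans[trans]: "Q k p q \<Longrightarrow> Q k q r \<Longrightarrow> Q k p r"
proof -
  assume a: "Q k p q" "Q k q r"
  have "p - r = (p - q) + (q - r)" by simp
  then show ?thesis using a I_add[of "p - q" k "q - r"] unfolding Q_def' by simp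
qed
lemma Q_trans_eq1[trans]: "p = q \<Longrightarrow> Q k q r \<Longrightarrow> Q k p r" by simp
lemma Q_trans_eq2[trans]: "Q k p q \<Longrightarrow> q = r \<Longrightarrow> Q k p r" by simp
lemma Q_V: "Q k p q \<Longrightarrow> p \<in> Vn k" "Q k p q \<Longrightarrow> q \<in> Vn k"
  by (simp_all add: Q_def')
lemma Q_add: "Q k p p' \<Longrightarrow> Q k q q' \<Longrightarrow> Q k (p + q) (p' + q')"
proof -
  assume a: "Q k p p'" "Q k q q'"
  have e: "(p + q) - (p' + q') = (p - p') + (q - q')" by (simp add: algebra_simps)
  show ?thesis using a I_add[of "p - p'" k "q - q'"] unfolding Q_def' e by simp
qed
lemma Q_uminus: "Q k p p' \<Longrightarrow> Q k (- p) (- p')"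
proof -
  assume a: "Q k p p'"
  have e: "(- p) - (- p') = - (p - p')" by (simp add: algebra_simps)
  show ?thesis using a I_uminus[of "p - p'" k] unfolding Q_def' e by simp
qed
lemma Q_diff: "Q k p p' \<Longrightarrow> Q k q q' \<Longrightarrow> Q k (p - q) (p' - q')"
proof -
  assume a: "Q k p p'" "Q k q q'"
  have "Q k (p + - q) (p' + - q')" by (rule Q_add[OF a(1) Q_uminus[OF a(2)]])
  then show ?thesis by simp
qed
lemma Q_mult: "Q k p p' \<Longrightarrow> Q k q q' \<Longrightarrow> Q k (p * q) (p' * q')"
proof -
  assume a: "Q k p p'" "Q k q q'"
  have e: "p * q - p' * q' = (p - p') * q + p' * (q - q')" by (simp add: algebra_simps)
  have "(p - p') * q \<in> I k" using a by (simp add: Q_def' I_right)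
  moreover have "p' * (q - q') \<in> I k" using a by (simp add: Q_def' I_left)
  ultimately show ?thesis using a I_add unfolding Q_def' e by simp
qed
lemma Q_multL: "u \<in> Vn k \<Longrightarrow> Q k q q' \<Longrightarrow> Q k (u * q) (u * q')"
  by (rule Q_mult[OF Q_refl])
lemma Q_multR: "u \<in> Vn k \<Longrightarrow> Q k q q' \<Longrightarrow> Q k (q * u) (q' * u)"
  by (rule Q_mult[OF _ Q_refl])
lemma Q_addL: "u \<in> Vn k \<Longrightarrow> Q k q q' \<Longrightarrow> Q k (u + q) (u + q')"
  by (rule Q_add[OF Q_refl])
lemma Q_addR: "u \<in> Vn k \<Longrightarrow> Q k q q' \<Longrightarrow> Q k (q + u) (q' + u)"
  by (rule Q_add[OF _ Q_refl])
lemma Q_power: assumes "Q k p p'" shows "Q k (p ^ e) (p' ^ e)"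
proof (induction e)
  case 0 show ?case using Q_V[OF assms] by (simp add: Q_refl)
next
  case (Suc e) show ?case unfolding power_Suc by (rule Q_mult[OF assms Suc.IH])
qed
lemma Q_sum: "(\<And>x. x \<in> SS \<Longrightarrow> Q k (f x) (g x)) \<Longrightarrow> Q k (sum f SS) (sum g SS)"
proof (induction SS rule: infinite_finite_induct)
  case (infinite A) show ?case using infinite.hyps by (simp add: Q_refl)
next
  case empty then show ?case by (simp only: sum.empty) (rule Q_refl, simp)
next
  case (insert x F)
  have h1: "Q k (f x) (g x)" by (rule insert.prems) simp
  have h2: "Q k (sum f F) (sum g F)" by (rule insert.IH) (rule insert.prems, simp)
  have "Q k (f x + sum f F) (g x + sum g F)" by (rule Q_add[OF h1 h2])
  moreover have "sum f (insert x F) = f x + sum f F" "sum g (insert x F) = g x + sum g F"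
    using insert.hyps by simp_all
  ultimately show ?case by simp
qed
lemma Q_rel: "p \<in> Vn k \<Longrightarrow> q \<in> Vn k \<Longrightarrow> p - q \<in> qawa_rels sc A0 A1 B dual z k \<Longrightarrow> Q k p q"
  by (simp add: Q_def' I_rel)
lemma Q_I: "p \<in> Vn k \<Longrightarrow> p \<in> I k \<Longrightarrow> Q k p 0"
  by (simp add: Q_def')

end

lemma rel_E_add: "1 \<le> i \<Longrightarrow> i \<le> k \<Longrightarrow> gE i (a + b) - (gE i a + gE i b) \<in> qawa_rels sc A0 A1 B dual z k"
  unfolding qawa_rels_def by (rule UnI1, rule UnI1, rule UnI1, rule UnI1, rule UnI1, rule UnI1, rule UnI1, rule UnI1, rule UnI1, rule UnI1, rule UnI1, rule UnI1, rule UnI1, rule UnI1, rule UnI1, rule UnI1, blast)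
lemma rel_E_sc: "1 \<le> i \<Longrightarrow> i \<le> k \<Longrightarrow> gE i (sc c a) - fscal c * gE i a \<in> qawa_rels sc A0 A1 B dual z k"
  unfolding qawa_rels_def by (rule UnI1, rule UnI1, rule UnI1, rule UnI1, rule UnI1, rule UnI1, rule UnI1, rule UnI1, rule UnI1, rule UnI1, rule UnI1, rule UnI1, rule UnI1, rule UnI1, rule UnI1, rule UnI2, blast)
lemma rel_E_1: "1 \<le> i \<Longrightarrow> i \<le> k \<Longrightarrow> gE i 1 - 1 \<in> qawa_rels sc A0 A1 B dual z k"
  unfolding qawa_rels_def by (rule UnI1, rule UnI1, rule UnI1, rule UnI1, rule UnI1, rule UnI1, rule UnI1, rule UnI1, rule UnI1, rule UnI1, rule UnI1, rule UnI1, rule UnI1, rule UnI1, rule UnI2, blast)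
lemma rel_E_mult: "1 \<le> i \<Longrightarrow> i \<le> k \<Longrightarrow> gE i a * gE i b - gE i (a * b) \<in> qawa_rels sc A0 A1 B dual z k"
  unfolding qawa_rels_def by (rule UnI1, rule UnI1, rule UnI1, rule UnI1, rule UnI1, rule UnI1, rule UnI1, rule UnI1, rule UnI1, rule UnI1, rule UnI1, rule UnI1, rule UnI1, rule UnI2, blast)
lemma rel_E_comm: "1 \<le> i \<Longrightarrow> i \<le> k \<Longrightarrow> 1 \<le> j \<Longrightarrow> j \<le> k \<Longrightarrow> i \<noteq> j \<Longrightarrow> a \<in> A0 \<union> A1 \<Longrightarrow> b \<in> A0 \<union> A1 \<Longrightarrow> gE i a * gE j b - fscal (sgn_par A1 a b) * gE j b * gE i a \<in> qawa_rels sc A0 A1 B dual z k"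
  unfolding qawa_rels_def by (rule UnI1, rule UnI1, rule UnI1, rule UnI1, rule UnI1, rule UnI1, rule UnI1, rule UnI1, rule UnI1, rule UnI1, rule UnI1, rule UnI1, rule UnI2, blast)
lemma rel_XX: "1 \<le> i \<Longrightarrow> i \<le> k \<Longrightarrow> 1 \<le> j \<Longrightarrow> j \<le> k \<Longrightarrow> gX i * gX j - gX j * gX i \<in> qawa_rels sc A0 A1 B dual z k"
  unfolding qawa_rels_def by (rule UnI1, rule UnI1, rule UnI1, rule UnI1, rule UnI1, rule UnI1, rule UnI1, rule UnI1, rule UnI1, rule UnI2, blast)
lemma rel_XE: "1 \<le> i \<Longrightarrow> i \<le> k \<Longrightarrow> 1 \<le> j \<Longrightarrow> j \<le> k \<Longrightarrow> gX i * gE j a - gE j a * gX i \<in> qawa_rels sc A0 A1 B dual z k"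
  unfolding qawa_rels_def by (rule UnI1, rule UnI1, rule UnI1, rule UnI1, rule UnI1, rule UnI1, rule UnI1, rule UnI1, rule UnI2, blast)
lemma rel_SS: "1 \<le> i \<Longrightarrow> i < k \<Longrightarrow> 1 \<le> j \<Longrightarrow> j < k \<Longrightarrow> i + 1 < j \<or> j + 1 < i \<Longrightarrow> gS i * gS j - gS j * gS i \<in> qawa_rels sc A0 A1 B dual z k"
  unfolding qawa_rels_def by (rule UnI1, rule UnI1, rule UnI1, rule UnI1, rule UnI1, rule UnI1, rule UnI1, rule UnI2, blast)
lemma rel_braid: "1 \<le> i \<Longrightarrow> Suc i < k \<Longrightarrow> gS i * gS (Suc i) * gS i - gS (Suc i) * gS i * gS (Suc i) \<in> qawa_rels sc A0 A1 B dual z k"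
  unfolding qawa_rels_def by (rule UnI1, rule UnI1, rule UnI1, rule UnI1, rule UnI1, rule UnI1, rule UnI2, blast)
lemma rel_sq: "1 \<le> i \<Longrightarrow> i < k \<Longrightarrow> gS i * gS i - (fscal z * tau B dual i * gS i + 1) \<in> qawa_rels sc A0 A1 B dual z k"
  unfolding qawa_rels_def by (rule UnI1, rule UnI1, rule UnI1, rule UnI1, rule UnI1, rule UnI2, blast)
lemma rel_SE1: "1 \<le> i \<Longrightarrow> i < k \<Longrightarrow> gS i * gE i a - gE (Suc i) a * gS i \<in> qawa_rels sc A0 A1 B dual z k"
  unfolding qawa_rels_def by (rule UnI1, rule UnI1, rule UnI1, rule UnI1, rule UnI2, blast)
lemma rel_SE2: "1 \<le> i \<Longrightarrow> i < k \<Longrightarrow> gS i * gE (Suc i) a - gE i a * gS i \<in> qawa_rels sc A0 A1 B dual z k"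
  unfolding qawa_rels_def by (rule UnI1, rule UnI1, rule UnI1, rule UnI2, blast)
lemma rel_SE: "1 \<le> i \<Longrightarrow> i < k \<Longrightarrow> 1 \<le> j \<Longrightarrow> j \<le> k \<Longrightarrow> j \<noteq> i \<Longrightarrow> j \<noteq> Suc i \<Longrightarrow> gS i * gE j a - gE j a * gS i \<in> qawa_rels sc A0 A1 B dual z k"
  unfolding qawa_rels_def by (rule UnI1, rule UnI1, rule UnI2, blast)
lemma rel_SX: "1 \<le> i \<Longrightarrow> i < k \<Longrightarrow> 1 \<le> j \<Longrightarrow> j \<le> k \<Longrightarrow> j \<noteq> i \<Longrightarrow> j \<noteq> Suc i \<Longrightarrow> gS i * gX j - gX j * gS i \<in> qawa_rels sc A0 A1 B dual z k"
  unfolding qawa_rels_def by (rule UnI1, rule UnI2, blast)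
lemma rel_SXS: "1 \<le> i \<Longrightarrow> i < k \<Longrightarrow> gS i * gX i * gS i - gX (Suc i) \<in> qawa_rels sc A0 A1 B dual z k"
  unfolding qawa_rels_def by (rule UnI2, blast)

lemma Q_ctx: "EQ sc A0 A1 B dual z fc l k a b \<Longrightarrow> u \<in> Vn k \<Longrightarrow> v \<in> Vn k \<Longrightarrow> L = u * a * v \<Longrightarrow> R = u * b * v
  \<Longrightarrow> EQ sc A0 A1 B dual z fc l k L R"
proof -
  assume a: "EQ sc A0 A1 B dual z fc l k a b" "u \<in> Vn k" "v \<in> Vn k" "L = u * a * v" "R = u * b * v"
  have "EQ sc A0 A1 B dual z fc l k (u * a * v) (u * b * v)" by (rule Q_multR[OF a(3) Q_multL[OF a(2) a(1)]])
  then show ?thesis using a(4,5) by simp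
qed

lemma fs2: "(p::('g,'k::comm_ring_1) freealg) * fscal c = fscal c * p"
  using fscal_comm[of c p] by simp
lemma fs1: "(p::('g,'k::comm_ring_1) freealg) * (fscal c * q) = fscal c * (p * q)"
  by (metis fscal_comm mult.assoc)

locale qctx =
  fixes sc :: "'k::comm_ring_1 \<Rightarrow> 'a::ring_1 \<Rightarrow> 'a" and A0 A1 :: "'a set" and tr :: "'a \<Rightarrow> 'k"
    and B :: "'a set" and dual :: "'a \<Rightarrow> 'a" and z :: 'k and fc :: "nat \<Rightarrow> 'a"
    and l n :: nat and T :: "('a,'k) qfree \<Rightarrow> ('a,'k) qfree"
  assumes A: "sym_frob_superalg sc A0 A1 tr B dual"
    and n1: "1 \<le> n"
    and T: "is_qwa_trace sc A0 A1 tr B dual z fc l n T"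
begin

abbreviation "QQ k \<equiv> EQ sc A0 A1 B dual z fc l k"

lemma grading: "\<exists>a0\<in>A0. \<exists>a1\<in>A1. a = a0 + a1"
proof -
  have "\<forall>a. \<exists>a0\<in>A0. \<exists>a1\<in>A1. a = a0 + a1" using A unfolding sym_frob_superalg_def by (elim conjE)
  then show ?thesis by blast
qed

lemma finB: "finite B"
  using A unfolding sym_frob_superalg_def by (elim conjE)

lemma T_V: "p \<in> Vn n \<Longrightarrow> T p \<in> Vn (n - 1)"
  using T unfolding is_qwa_trace_def Let_def by blast
lemma T_cong: "QQ n p q \<Longrightarrow> QQ (n - 1) (T p) (T q)"
  using T unfolding is_qwa_trace_def Let_def EQ_def by blast
lemma T_add: "p \<in> Vn n \<Longrightarrow> q \<in> Vn n \<Longrightarrow> QQ (n - 1) (T (p + q)) (T p + T q)"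
  using T unfolding is_qwa_trace_def Let_def EQ_def by blast
lemma T_left: "u \<in> Vn (n - 1) \<Longrightarrow> p \<in> Vn n \<Longrightarrow> QQ (n - 1) (T (u * p)) (u * T p)"
  using T unfolding is_qwa_trace_def Let_def EQ_def by blast
lemma T_right: "u \<in> Vn (n - 1) \<Longrightarrow> p \<in> Vn n \<Longrightarrow> QQ (n - 1) (T (p * u)) (T p * u)"
  using T unfolding is_qwa_trace_def Let_def EQ_def by blast
lemma T_S: "2 \<le> n \<Longrightarrow> QQ (n - 1) (T (gS (n - 1))) 0"
  using T unfolding is_qwa_trace_def Let_def EQ_def by blast
lemma T_X: "r < l \<Longrightarrow> QQ (n - 1) (T (gE n a * gX n ^ r)) (if r = 0 then fscal (tr a) else 0)"
  using T unfolding is_qwa_trace_def Let_def EQ_def by blast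

lemma qE_add: "1 \<le> i \<Longrightarrow> i \<le> k \<Longrightarrow> QQ k (gE i (a + b)) (gE i a + gE i b)"
  by (rule Q_rel) (simp_all add: rel_E_add)
lemma qE_1: "1 \<le> i \<Longrightarrow> i \<le> k \<Longrightarrow> QQ k (gE i 1) 1"
  by (rule Q_rel) (simp_all add: rel_E_1)
lemma qE_mult: "1 \<le> i \<Longrightarrow> i \<le> k \<Longrightarrow> QQ k (gE i a * gE i b) (gE i (a * b))"
  by (rule Q_rel) (simp_all add: rel_E_mult)
lemma qE_comm: "1 \<le> i \<Longrightarrow> i \<le> k \<Longrightarrow> 1 \<le> j \<Longrightarrow> j \<le> k \<Longrightarrow> i \<noteq> j \<Longrightarrow> a \<in> A0 \<union> A1 \<Longrightarrow> b \<in> A0 \<union> A1 \<Longrightarrow>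
  QQ k (gE i a * gE j b) (fscal (sgn_par A1 a b) * gE j b * gE i a)"
  by (rule Q_rel) (simp_all add: rel_E_comm)
lemma qXX: "1 \<le> i \<Longrightarrow> i \<le> k \<Longrightarrow> 1 \<le> j \<Longrightarrow> j \<le> k \<Longrightarrow> QQ k (gX i * gX j) (gX j * gX i)"
  by (rule Q_rel) (simp_all add: rel_XX)
lemma qXE: "1 \<le> i \<Longrightarrow> i \<le> k \<Longrightarrow> 1 \<le> j \<Longrightarrow> j \<le> k \<Longrightarrow> QQ k (gX i * gE j a) (gE j a * gX i)"
  by (rule Q_rel) (simp_all add: rel_XE)
lemma qSS: "1 \<le> i \<Longrightarrow> i < k \<Longrightarrow> 1 \<le> j \<Longrightarrow> j < k \<Longrightarrow> i + 1 < j \<or> j + 1 < i \<Longrightarrow> QQ k (gS i * gS j) (gS j * gS i)"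
  by (rule Q_rel) (simp_all add: rel_SS)
lemma qbraid: "1 \<le> i \<Longrightarrow> Suc i < k \<Longrightarrow> QQ k (gS i * gS (Suc i) * gS i) (gS (Suc i) * gS i * gS (Suc i))"
  by (rule Q_rel) (simp_all add: rel_braid)
lemma qsq: "1 \<le> i \<Longrightarrow> i < k \<Longrightarrow> QQ k (gS i * gS i) (fscal z * tau B dual i * gS i + 1)"
  by (rule Q_rel) (simp_all add: rel_sq)
lemma qSE1: "1 \<le> i \<Longrightarrow> i < k \<Longrightarrow> QQ k (gS i * gE i a) (gE (Suc i) a * gS i)"
  by (rule Q_rel) (simp_all add: rel_SE1)
lemma qSE2: "1 \<le> i \<Longrightarrow> i < k \<Longrightarrow> QQ k (gS i * gE (Suc i) a) (gE i a * gS i)"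
  by (rule Q_rel) (simp_all add: rel_SE2)
lemma qSE: "1 \<le> i \<Longrightarrow> i < k \<Longrightarrow> 1 \<le> j \<Longrightarrow> j \<le> k \<Longrightarrow> j \<noteq> i \<Longrightarrow> j \<noteq> Suc i \<Longrightarrow> QQ k (gS i * gE j a) (gE j a * gS i)"
  by (rule Q_rel) (simp_all add: rel_SE)
lemma qSX: "1 \<le> i \<Longrightarrow> i < k \<Longrightarrow> 1 \<le> j \<Longrightarrow> j \<le> k \<Longrightarrow> j \<noteq> i \<Longrightarrow> j \<noteq> Suc i \<Longrightarrow> QQ k (gS i * gX j) (gX j * gS i)"
  by (rule Q_rel) (simp_all add: rel_SX)
lemma qSXS: "1 \<le> i \<Longrightarrow> i < k \<Longrightarrow> QQ k (gS i * gX i * gS i) (gX (Suc i))"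
  by (rule Q_rel) (simp_all add: rel_SXS)

lemma qE_split: assumes "1 \<le> i" "i \<le> k"
  obtains a0 a1 where "a0 \<in> A0" "a1 \<in> A1" "QQ k (gE i a) (gE i a0 + gE i a1)"
proof -
  obtain a0 a1 where "a0 \<in> A0" "a1 \<in> A1" "a = a0 + a1" using grading by blast
  then show ?thesis using that qE_add[OF assms] by blast
qed

definition CM where "CM k g h \<longleftrightarrow> QQ k (g * h) (h * g)"

lemma CM_sym: "CM k g h \<Longrightarrow> CM k h g"
  unfolding CM_def by (rule Q_sym)
lemma CM_1: "g \<in> Vn k \<Longrightarrow> CM k g 1"
  unfolding CM_def by (simp add: Q_refl)
lemma CM_fscal: "g \<in> Vn k \<Longrightarrow> CM k g (fscal c)"
  unfolding CM_def by (simp add: Q_refl fscal_comm)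
lemma CM_multR: assumes "g \<in> Vn k" "h1 \<in> Vn k" "h2 \<in> Vn k" "CM k g h1" "CM k g h2"
  shows "CM k g (h1 * h2)"
proof -
  have "QQ k (g * (h1 * h2)) (h1 * g * h2)"
    using Q_multR[OF assms(3) assms(4)[unfolded CM_def]] by (simp add: mult.assoc)
  also have "QQ k (h1 * g * h2) (h1 * (h2 * g))"
    using Q_multL[OF assms(2) assms(5)[unfolded CM_def]] by (simp add: mult.assoc)
  finally show ?thesis unfolding CM_def by (simp add: mult.assoc)
qed
lemma CM_multL: "g \<in> Vn k \<Longrightarrow> h1 \<in> Vn k \<Longrightarrow> h2 \<in> Vn k \<Longrightarrow> CM k h1 g \<Longrightarrow> CM k h2 g \<Longrightarrow> CM k (h1 * h2) g"
  using CM_multR CM_sym by blast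
lemma CM_powR: "g \<in> Vn k \<Longrightarrow> h \<in> Vn k \<Longrightarrow> CM k g h \<Longrightarrow> CM k g (h ^ e)"
  by (induction e) (simp_all add: CM_1 CM_multR)
lemma CM_powL: "g \<in> Vn k \<Longrightarrow> h \<in> Vn k \<Longrightarrow> CM k g h \<Longrightarrow> CM k (g ^ e) h"
  using CM_powR[of h k g e] CM_sym by blast
lemma CM_sumR: assumes "g \<in> Vn k" "\<And>b. b \<in> SS \<Longrightarrow> CM k g (f b)"
  shows "CM k g (sum f SS)"
proof -
  have "QQ k (\<Sum>b\<in>SS. g * f b) (\<Sum>b\<in>SS. f b * g)"
    by (rule Q_sum) (use assms(2) in \<open>simp add: CM_def\<close>)
  then show ?thesis unfolding CM_def by (simp add: sum_distrib_left sum_distrib_right)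
qed
lemma CM_sumL: "g \<in> Vn k \<Longrightarrow> (\<And>b. b \<in> SS \<Longrightarrow> CM k (f b) g) \<Longrightarrow> CM k (sum f SS) g"
  using CM_sumR[of g k SS f] CM_sym by blast

lemma CM_XE: "1 \<le> i \<Longrightarrow> i \<le> k \<Longrightarrow> 1 \<le> j \<Longrightarrow> j \<le> k \<Longrightarrow> CM k (gX i) (gE j a)"
  unfolding CM_def by (rule qXE)
lemma CM_XX: "1 \<le> i \<Longrightarrow> i \<le> k \<Longrightarrow> 1 \<le> j \<Longrightarrow> j \<le> k \<Longrightarrow> CM k (gX i) (gX j)"
  unfolding CM_def by (rule qXX)
lemma CM_SE: "1 \<le> i \<Longrightarrow> i < k \<Longrightarrow> 1 \<le> j \<Longrightarrow> j \<le> k \<Longrightarrow> j \<noteq> i \<Longrightarrow> j \<noteq> Suc i \<Longrightarrow> CM k (gS i) (gE j a)"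
  unfolding CM_def by (rule qSE)
lemma CM_SX: "1 \<le> i \<Longrightarrow> i < k \<Longrightarrow> 1 \<le> j \<Longrightarrow> j \<le> k \<Longrightarrow> j \<noteq> i \<Longrightarrow> j \<noteq> Suc i \<Longrightarrow> CM k (gS i) (gX j)"
  unfolding CM_def by (rule qSX)
lemma CM_SS: "1 \<le> i \<Longrightarrow> i < k \<Longrightarrow> 1 \<le> j \<Longrightarrow> j < k \<Longrightarrow> i + 1 < j \<or> j + 1 < i \<Longrightarrow> CM k (gS i) (gS j)"
  unfolding CM_def by (rule qSS)
lemma CM_X_tau: "1 \<le> i \<Longrightarrow> i \<le> k \<Longrightarrow> 1 \<le> m \<Longrightarrow> m < k \<Longrightarrow> CM k (gX i) (tau B dual m)"
  unfolding tau_def by (rule CM_sumR) (simp_all add: CM_multR CM_XE)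



abbreviation "Tz p \<equiv> QQ (n - 1) (T p) 0"

lemma T_0: "Tz 0"
proof -
  have a: "QQ (n - 1) (T 0) (T 0 + T 0)" using T_add[of 0 0] by simp
  have v: "T 0 \<in> Vn (n - 1)" by (rule T_V) simp
  have "QQ (n - 1) (T 0 - T 0) (T 0 + T 0 - T 0)" by (rule Q_diff[OF a Q_refl[OF v]])
  then show ?thesis by (simp add: Q_sym)
qed
lemma Tz_eq: assumes "QQ n p q" "Tz q" shows "Tz p"
  by (rule Q_trans[OF T_cong[OF assms(1)] assms(2)])
lemma Tz_add: assumes "p \<in> Vn n" "q \<in> Vn n" "Tz p" "Tz q" shows "Tz (p + q)"
proof -
  have "QQ (n - 1) (T (p + q)) (T p + T q)" by (rule T_add[OF assms(1,2)])
  also have "QQ (n - 1) (T p + T q) (0 + 0)" by (rule Q_add[OF assms(3,4)])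
  finally show ?thesis by simp
qed
lemma Tz_left: assumes "u \<in> Vn (n - 1)" "p \<in> Vn n" "Tz p" shows "Tz (u * p)"
proof -
  have "QQ (n - 1) (T (u * p)) (u * T p)" by (rule T_left[OF assms(1,2)])
  also have "QQ (n - 1) (u * T p) (u * 0)" by (rule Q_multL[OF assms(1,3)])
  finally show ?thesis by simp
qed
lemma Tz_right: assumes "u \<in> Vn (n - 1)" "p \<in> Vn n" "Tz p" shows "Tz (p * u)"
proof -
  have "QQ (n - 1) (T (p * u)) (T p * u)" by (rule T_right[OF assms(1,2)])
  also have "QQ (n - 1) (T p * u) (0 * u)" by (rule Q_multR[OF assms(1,3)])
  finally show ?thesis by simp
qed

lemma Vn_down: "p \<in> Vn (n - 1) \<Longrightarrow> p \<in> Vn n"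
  using Vn_mono by fastforce

lemma gEn_V[simp]: "gE n a \<in> Vn n"
  using n1 by simp

definition PP where "PP p \<longleftrightarrow> p \<in> Vn n \<and> (\<forall>a b. Tz (gE n a * p * gE n b))"

lemma PP_V: "PP p \<Longrightarrow> p \<in> Vn n"
  by (simp add: PP_def)

lemma PP_intro_h: assumes pv: "p \<in> Vn n"
  and h: "\<And>a b. a \<in> A0 \<union> A1 \<Longrightarrow> b \<in> A0 \<union> A1 \<Longrightarrow> Tz (gE n a * p * gE n b)"
  shows "PP p"
  unfolding PP_def
proof (intro conjI allI pv)
  fix a b
  obtain a0 a1 where a: "a0 \<in> A0" "a1 \<in> A1" "QQ n (gE n a) (gE n a0 + gE n a1)"
    using qE_split[of n n a] n1 by auto
  obtain b0 b1 where b: "b0 \<in> A0" "b1 \<in> A1" "QQ n (gE n b) (gE n b0 + gE n b1)"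
    using qE_split[of n n b] n1 by auto
  have "QQ n (gE n a * p * gE n b) ((gE n a0 + gE n a1) * p * (gE n b0 + gE n b1))"
    by (rule Q_mult[OF Q_mult[OF a(3) Q_refl[OF pv]] b(3)])
  also have "(gE n a0 + gE n a1) * p * (gE n b0 + gE n b1) =
     (gE n a0 * p * gE n b0 + gE n a0 * p * gE n b1) + (gE n a1 * p * gE n b0 + gE n a1 * p * gE n b1)"
    by (simp add: algebra_simps)
  finally have e: "QQ n (gE n a * p * gE n b) ((gE n a0 * p * gE n b0 + gE n a0 * p * gE n b1) + (gE n a1 * p * gE n b0 + gE n a1 * p * gE n b1))" .
  show "Tz (gE n a * p * gE n b)"
    by (rule Tz_eq[OF e]) (intro Tz_add h; use a b pv in simp)
qed

lemma PP_T: assumes "PP p" shows "Tz p"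
proof -
  have pv: "p \<in> Vn n" using assms by (simp add: PP_def)
  have "QQ n p (gE n 1 * p * gE n 1)"
    using Q_mult[OF Q_mult[OF Q_sym[OF qE_1[of n n]] Q_refl[OF pv]] Q_sym[OF qE_1[of n n]]] n1 by simp
  moreover have "Tz (gE n 1 * p * gE n 1)" using assms by (simp add: PP_def)
  ultimately show ?thesis by (rule Tz_eq)
qed

lemma PP_eq: assumes "QQ n p q" "PP q" shows "PP p"
  unfolding PP_def
proof (intro conjI allI)
  show "p \<in> Vn n" using assms(1) by (rule Q_V)
  fix a b
  have "QQ n (gE n a * p * gE n b) (gE n a * q * gE n b)"
    by (rule Q_ctx[OF assms(1)]) simp_all
  moreover have "Tz (gE n a * q * gE n b)" using assms(2) by (simp add: PP_def)
  ultimately show "Tz (gE n a * p * gE n b)" by (rule Tz_eq)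
qed

lemma PP_0: "PP 0"
  unfolding PP_def using T_0 by simp

lemma PP_add: assumes "PP p" "PP q" shows "PP (p + q)"
  unfolding PP_def
proof (intro conjI allI)
  show "p + q \<in> Vn n" using assms by (simp add: PP_def)
  fix a b
  have "gE n a * (p + q) * gE n b = gE n a * p * gE n b + gE n a * q * gE n b" by (simp add: algebra_simps)
  then show "Tz (gE n a * (p + q) * gE n b)"
    using assms Tz_add[of "gE n a * p * gE n b" "gE n a * q * gE n b"] unfolding PP_def by simp
qed

lemma PP_sum: "(\<And>x. x \<in> SS \<Longrightarrow> PP (f x)) \<Longrightarrow> PP (sum f SS)"
proof (induction SS rule: infinite_finite_induct)
  case (infinite A) show ?case using infinite.hyps by (simp add: PP_0)
next
  case empty show ?case by (simp add: PP_0)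
next
  case (insert x F)
  have "PP (f x + sum f F)" by (rule PP_add) (use insert in auto)
  then show ?case using insert.hyps by simp
qed

lemma PP_left_comm: assumes u: "u \<in> Vn (n - 1)" and c: "\<And>a. CM n (gE n a) u" and p: "PP p"
  shows "PP (u * p)"
  unfolding PP_def
proof (intro conjI allI)
  have uv: "u \<in> Vn n" using u by (rule Vn_down)
  have pv: "p \<in> Vn n" using p by (simp add: PP_def)
  show "u * p \<in> Vn n" using uv pv by simp
  fix a b
  have "QQ n (gE n a * u * (p * gE n b)) (u * gE n a * (p * gE n b))"
    by (rule Q_multR[OF _ c[unfolded CM_def]]) (use pv in simp)
  then have "QQ n (gE n a * (u * p) * gE n b) (u * (gE n a * p * gE n b))"
    by (simp add: mult.assoc)
  moreover have "Tz (u * (gE n a * p * gE n b))"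
    by (rule Tz_left[OF u]) (use pv p in \<open>simp_all add: PP_def\<close>)
  ultimately show "Tz (gE n a * (u * p) * gE n b)" by (rule Tz_eq)
qed

lemma PP_right_comm: assumes u: "u \<in> Vn (n - 1)" and c: "\<And>b. CM n u (gE n b)" and p: "PP p"
  shows "PP (p * u)"
  unfolding PP_def
proof (intro conjI allI)
  have uv: "u \<in> Vn n" using u by (rule Vn_down)
  have pv: "p \<in> Vn n" using p by (simp add: PP_def)
  show "p * u \<in> Vn n" using uv pv by simp
  fix a b
  have "QQ n (gE n a * p * (u * gE n b)) (gE n a * p * (gE n b * u))"
    by (rule Q_multL[OF _ c[unfolded CM_def]]) (use pv in simp)
  then have "QQ n (gE n a * (p * u) * gE n b) ((gE n a * p * gE n b) * u)"
    by (simp add: mult.assoc)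
  moreover have "Tz ((gE n a * p * gE n b) * u)"
    by (rule Tz_right[OF u]) (use pv p in \<open>simp_all add: PP_def\<close>)
  ultimately show "Tz (gE n a * (p * u) * gE n b)" by (rule Tz_eq)
qed

lemma PP_fscal: "PP p \<Longrightarrow> PP (fscal c * p)"
  by (rule PP_left_comm) (simp_all add: CM_fscal)
lemma PP_uminus: "PP p \<Longrightarrow> PP (- p)"
  using PP_fscal[of p "-1"] by (simp add: fscal_uminus)
lemma PP_diff: "PP p \<Longrightarrow> PP q \<Longrightarrow> PP (p - q)"
  using PP_add[of p "- q"] PP_uminus[of q] by simp

lemma PP_En_left: assumes p: "PP p" shows "PP (gE n c * p)"
  unfolding PP_def
proof (intro conjI allI)
  have pv: "p \<in> Vn n" using p by (simp add: PP_def)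
  show "gE n c * p \<in> Vn n" using pv by simp
  fix a b
  have "QQ n (gE n a * gE n c * (p * gE n b)) (gE n (a * c) * (p * gE n b))"
    by (rule Q_multR[OF _ qE_mult]) (use pv n1 in simp_all)
  then have "QQ n (gE n a * (gE n c * p) * gE n b) (gE n (a * c) * p * gE n b)"
    by (simp add: mult.assoc)
  moreover have "Tz (gE n (a * c) * p * gE n b)" using p by (simp add: PP_def)
  ultimately show "Tz (gE n a * (gE n c * p) * gE n b)" by (rule Tz_eq)
qed

lemma PP_En_right: assumes p: "PP p" shows "PP (p * gE n c)"
  unfolding PP_def
proof (intro conjI allI)
  have pv: "p \<in> Vn n" using p by (simp add: PP_def)
  show "p * gE n c \<in> Vn n" using pv by simp
  fix a b
  have "QQ n ((gE n a * p) * (gE n c * gE n b)) ((gE n a * p) * gE n (c * b))"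
    by (rule Q_multL[OF _ qE_mult]) (use pv n1 in simp_all)
  then have "QQ n (gE n a * (p * gE n c) * gE n b) (gE n a * p * gE n (c * b))"
    by (simp add: mult.assoc)
  moreover have "Tz (gE n a * p * gE n (c * b))" using p by (simp add: PP_def)
  ultimately show "Tz (gE n a * (p * gE n c) * gE n b)" by (rule Tz_eq)
qed

lemma PP_Eh_left: assumes j: "1 \<le> j" "j < n" and c: "c \<in> A0 \<union> A1" and p: "PP p"
  shows "PP (gE j c * p)"
proof (rule PP_intro_h)
  have pv: "p \<in> Vn n" using p by (simp add: PP_def)
  show "gE j c * p \<in> Vn n" using pv j by simp
  fix a b assume a: "a \<in> A0 \<union> A1" and b: "b \<in> A0 \<union> A1"
  have "QQ n (gE n a * gE j c * (p * gE n b)) (fscal (sgn_par A1 a c) * gE j c * gE n a * (p * gE n b))"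
    by (rule Q_multR[OF _ qE_comm]) (use pv j a c n1 in simp_all)
  then have "QQ n (gE n a * (gE j c * p) * gE n b) ((fscal (sgn_par A1 a c) * gE j c) * (gE n a * p * gE n b))"
    by (simp add: mult.assoc)
  moreover have "Tz ((fscal (sgn_par A1 a c) * gE j c) * (gE n a * p * gE n b))"
    by (rule Tz_left) (use pv p j in \<open>simp_all add: PP_def\<close>)
  ultimately show "Tz (gE n a * (gE j c * p) * gE n b)" by (rule Tz_eq)
qed

lemma PP_Eh_right: assumes j: "1 \<le> j" "j < n" and c: "c \<in> A0 \<union> A1" and p: "PP p"
  shows "PP (p * gE j c)"
proof (rule PP_intro_h)
  have pv: "p \<in> Vn n" using p by (simp add: PP_def)
  show "p * gE j c \<in> Vn n" using pv j by simp
  fix a b assume a: "a \<in> A0 \<union> A1" and b: "b \<in> A0 \<union> A1"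
  have "QQ n ((gE n a * p) * (gE j c * gE n b)) ((gE n a * p) * (fscal (sgn_par A1 c b) * gE n b * gE j c))"
    by (rule Q_multL[OF _ qE_comm]) (use pv j b c n1 in simp_all)
  moreover have "(gE n a * p) * (fscal (sgn_par A1 c b) * gE n b * gE j c) = (gE n a * p * gE n b) * (fscal (sgn_par A1 c b) * gE j c)"
    by (simp add: mult.assoc fs1 fs2)
  ultimately have "QQ n (gE n a * (p * gE j c) * gE n b) ((gE n a * p * gE n b) * (fscal (sgn_par A1 c b) * gE j c))"
    by (simp add: mult.assoc)
  moreover have "Tz ((gE n a * p * gE n b) * (fscal (sgn_par A1 c b) * gE j c))"
    by (rule Tz_right) (use pv p j in \<open>simp_all add: PP_def\<close>)
  ultimately show "Tz (gE n a * (p * gE j c) * gE n b)" by (rule Tz_eq)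
qed

lemma PP_E_left: assumes j: "1 \<le> j" "j < n" and p: "PP p" shows "PP (gE j c * p)"
proof -
  obtain c0 c1 where c: "c0 \<in> A0" "c1 \<in> A1" "QQ n (gE j c) (gE j c0 + gE j c1)"
    using qE_split[of j n c] j by auto
  have pv: "p \<in> Vn n" using p by (simp add: PP_def)
  have "QQ n (gE j c * p) ((gE j c0 + gE j c1) * p)" by (rule Q_multR[OF pv c(3)])
  moreover have "PP ((gE j c0 + gE j c1) * p)"
    unfolding distrib_right by (intro PP_add PP_Eh_left j p) (use c in auto)
  ultimately show ?thesis by (rule PP_eq)
qed

lemma PP_E_right: assumes j: "1 \<le> j" "j < n" and p: "PP p" shows "PP (p * gE j c)"
proof -
  obtain c0 c1 where c: "c0 \<in> A0" "c1 \<in> A1" "QQ n (gE j c) (gE j c0 + gE j c1)"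
    using qE_split[of j n c] j by auto
  have pv: "p \<in> Vn n" using p by (simp add: PP_def)
  have "QQ n (p * gE j c) (p * (gE j c0 + gE j c1))" by (rule Q_multL[OF pv c(3)])
  moreover have "PP (p * (gE j c0 + gE j c1))"
    unfolding distrib_left by (intro PP_add PP_Eh_right j p) (use c in auto)
  ultimately show ?thesis by (rule PP_eq)
qed

lemma PP_X_left: assumes j: "1 \<le> j" "j < n" and p: "PP p" shows "PP (gX j ^ e * p)"
proof (rule PP_left_comm[OF _ _ p])
  show "gX j ^ e \<in> Vn (n - 1)" using j by simp
  fix a show "CM n (gE n a) (gX j ^ e)"
    by (rule CM_powR) (use j n1 in \<open>simp_all add: CM_sym CM_XE\<close>)
qed
lemma PP_X_right: assumes j: "1 \<le> j" "j < n" and p: "PP p" shows "PP (p * gX j ^ e)"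
proof (rule PP_right_comm[OF _ _ p])
  show "gX j ^ e \<in> Vn (n - 1)" using j by simp
  fix b show "CM n (gX j ^ e) (gE n b)"
    by (rule CM_powL) (use j n1 in \<open>simp_all add: CM_XE\<close>)
qed
lemma PP_S_left: assumes j: "1 \<le> j" "Suc j < n" and p: "PP p" shows "PP (gS j * p)"
proof (rule PP_left_comm[OF _ _ p])
  show "gS j \<in> Vn (n - 1)" using j by simp
  fix a show "CM n (gE n a) (gS j)"
    by (rule CM_sym, rule CM_SE) (use j in simp_all)
qed
lemma PP_S_right: assumes j: "1 \<le> j" "Suc j < n" and p: "PP p" shows "PP (p * gS j)"
proof (rule PP_right_comm[OF _ _ p])
  show "gS j \<in> Vn (n - 1)" using j by simp
  fix b show "CM n (gS j) (gE n b)"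
    by (rule CM_SE) (use j in simp_all)
qed


end

lemma Vn_prod_list: "(\<And>x. x \<in> set xs \<Longrightarrow> x \<in> Vn k) \<Longrightarrow> prod_list xs \<in> Vn k"
  by (induction xs) simp_all

context qctx
begin

lemma CM_prod_list: "g \<in> Vn k \<Longrightarrow> (\<And>x. x \<in> set xs \<Longrightarrow> x \<in> Vn k \<and> CM k g x) \<Longrightarrow> CM k g (prod_list xs)"
proof (induction xs)
  case Nil then show ?case by (simp add: CM_1)
next
  case (Cons x xs)
  have "CM k g (x * prod_list xs)"
    by (rule CM_multR) (use Cons in \<open>auto intro: Vn_prod_list\<close>)
  then show ?case by simp
qed

lemma PP_Sgen: assumes n2: "2 \<le> n" shows "PP (gS (n - 1))"
proof (rule PP_intro_h)
  define i where "i = n - 1"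
  have ni: "n = Suc i" "1 \<le> i" "i < n" using n2 by (simp_all add: i_def)
  show "gS (n - 1) \<in> Vn n" using n2 by simp
  fix a b assume a: "a \<in> A0 \<union> A1" and b: "b \<in> A0 \<union> A1"
  have 1: "QQ n (gE n a * gS i) (gS i * gE i a)"
    using Q_sym[OF qSE1[of i n a]] ni by simp
  have 2: "QQ n (gE i a * gE n b) (fscal (sgn_par A1 a b) * gE n b * gE i a)"
    by (rule qE_comm) (use ni a b in simp_all)
  have 3: "QQ n (gS i * gE n b) (gE i b * gS i)"
    using qSE2[of i n b] ni by simp
  have "QQ n (gE n a * gS i * gE n b) (gS i * gE i a * gE n b)"
    by (rule Q_multR[OF _ 1]) simp
  also have "gS i * gE i a * gE n b = gS i * (gE i a * gE n b)" by (simp add: mult.assoc)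
  also have "QQ n (gS i * (gE i a * gE n b)) (gS i * (fscal (sgn_par A1 a b) * gE n b * gE i a))"
    by (rule Q_multL[OF _ 2]) (use ni in simp)
  also have "(gS i :: ('a,'k) qfree) * (fscal (sgn_par A1 a b) * gE n b * gE i a) = fscal (sgn_par A1 a b) * (gS i * gE n b) * gE i a"
    by (simp add: mult.assoc fs1)
  also have "QQ n (fscal (sgn_par A1 a b) * (gS i * gE n b) * gE i a) (fscal (sgn_par A1 a b) * (gE i b * gS i) * gE i a)"
    by (rule Q_ctx[OF 3]) (use ni in simp_all)
  also have "fscal (sgn_par A1 a b) * (gE i b * gS i) * gE i a = (fscal (sgn_par A1 a b) * gE i b) * gS i * gE i a"
    by (simp add: mult.assoc)
  finally have e: "QQ n (gE n a * gS i * gE n b) ((fscal (sgn_par A1 a b) * gE i b) * gS i * gE i a)" .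
  have "Tz ((fscal (sgn_par A1 a b) * gE i b) * gS i * gE i a)"
  proof (rule Tz_right)
    show "Tz (fscal (sgn_par A1 a b) * gE i b * gS i)"
      by (rule Tz_left) (use ni T_S[OF n2] in \<open>simp_all add: i_def\<close>)
  qed (use ni in simp_all)
  then show "Tz (gE n a * gS (n - 1) * gE n b)" using Tz_eq[OF e] by (simp add: i_def)
qed

lemma PP_Xgen: assumes e: "1 \<le> e" "e < l" shows "PP (gX n ^ e)"
  unfolding PP_def
proof (intro conjI allI)
  show "gX n ^ e \<in> Vn n" using n1 by simp
  fix a b
  have c: "CM n (gX n ^ e) (gE n b)" by (rule CM_powL) (use n1 in \<open>simp_all add: CM_XE\<close>)
  have "QQ n (gE n a * (gX n ^ e * gE n b)) (gE n a * (gE n b * gX n ^ e))"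
    by (rule Q_multL[OF _ c[unfolded CM_def]]) simp
  also have "gE n a * (gE n b * gX n ^ e) = (gE n a * gE n b) * gX n ^ e" by (simp add: mult.assoc)
  also have "QQ n ((gE n a * gE n b) * gX n ^ e) (gE n (a * b) * gX n ^ e)"
    by (rule Q_multR[OF _ qE_mult]) (use n1 in simp_all)
  finally have q: "QQ n (gE n a * gX n ^ e * gE n b) (gE n (a * b) * gX n ^ e)" by (simp add: mult.assoc)
  have "Tz (gE n (a * b) * gX n ^ e)" using T_X[OF e(2), of "a * b"] e by simp
  then show "Tz (gE n a * gX n ^ e * gE n b)" by (rule Tz_eq[OF q])
qed

definition Lw where "Lw m = prod_list (map gS (rev [m..<n]))"
definition Rw where "Rw m = prod_list (map gS [m..<n])"

lemma Lw_n[simp]: "Lw n = 1" by (simp add: Lw_def)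
lemma Rw_n[simp]: "Rw n = 1" by (simp add: Rw_def)
lemma Lw_step: "m < n \<Longrightarrow> Lw m = Lw (Suc m) * gS m"
  by (simp add: Lw_def upt_conv_Cons)
lemma Rw_step: "m < n \<Longrightarrow> Rw m = gS m * Rw (Suc m)"
  by (simp add: Rw_def upt_conv_Cons)
lemma Lw_V[simp]: "1 \<le> m \<Longrightarrow> Lw m \<in> Vn n"
  unfolding Lw_def by (rule Vn_prod_list) auto
lemma Rw_V[simp]: "1 \<le> m \<Longrightarrow> Rw m \<in> Vn n"
  unfolding Rw_def by (rule Vn_prod_list) auto

lemma CM_Lw: "g \<in> Vn n \<Longrightarrow> 1 \<le> m \<Longrightarrow> (\<And>j. m \<le> j \<Longrightarrow> j < n \<Longrightarrow> CM n g (gS j)) \<Longrightarrow> CM n g (Lw m)"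
  unfolding Lw_def by (rule CM_prod_list) auto
lemma CM_Rw: "g \<in> Vn n \<Longrightarrow> 1 \<le> m \<Longrightarrow> (\<And>j. m \<le> j \<Longrightarrow> j < n \<Longrightarrow> CM n g (gS j)) \<Longrightarrow> CM n g (Rw m)"
  unfolding Rw_def by (rule CM_prod_list) auto

lemma shiftL: "m \<le> n \<Longrightarrow> 1 \<le> m \<Longrightarrow> QQ n (Lw m * gE m a) (gE n a * Lw m)"
proof (induction m rule: inc_induct)
  case base then show ?case using n1 by (simp add: Q_refl)
next
  case (step m)
  have "Lw m * gE m a = Lw (Suc m) * (gS m * gE m a)" using step by (simp add: Lw_step mult.assoc)
  also have "QQ n (Lw (Suc m) * (gS m * gE m a)) (Lw (Suc m) * (gE (Suc m) a * gS m))"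
    by (rule Q_multL[OF _ qSE1]) (use step in simp_all)
  also have "Lw (Suc m) * (gE (Suc m) a * gS m) = (Lw (Suc m) * gE (Suc m) a) * gS m" by (simp add: mult.assoc)
  also have "QQ n ((Lw (Suc m) * gE (Suc m) a) * gS m) ((gE n a * Lw (Suc m)) * gS m)"
    by (rule Q_multR[OF _ step.IH]) (use step in simp_all)
  also have "(gE n a * Lw (Suc m)) * gS m = gE n a * Lw m" using step by (simp add: Lw_step mult.assoc)
  finally show ?case .
qed

lemma shiftR: "m \<le> n \<Longrightarrow> 1 \<le> m \<Longrightarrow> QQ n (gE m a * Rw m) (Rw m * gE n a)"
proof (induction m rule: inc_induct)
  case base then show ?case using n1 by (simp add: Q_refl)
next
  case (step m)
  have "gE m a * Rw m = (gE m a * gS m) * Rw (Suc m)" using step by (simp add: Rw_step mult.assoc)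
  also have "QQ n ((gE m a * gS m) * Rw (Suc m)) ((gS m * gE (Suc m) a) * Rw (Suc m))"
  proof (rule Q_multR)
    show "QQ n (gE m a * gS m) (gS m * gE (Suc m) a)" by (rule Q_sym, rule qSE2) (use step in simp_all)
  qed (use step in simp)
  also have "(gS m * gE (Suc m) a) * Rw (Suc m) = gS m * (gE (Suc m) a * Rw (Suc m))" by (simp add: mult.assoc)
  also have "QQ n (gS m * (gE (Suc m) a * Rw (Suc m))) (gS m * (Rw (Suc m) * gE n a))"
    by (rule Q_multL[OF _ step.IH]) (use step in simp_all)
  also have "gS m * (Rw (Suc m) * gE n a) = Rw m * gE n a" using step by (simp add: Rw_step mult.assoc)
  finally show ?case .
qed

end

context qctx
begin

lemma braidP: "Suc m \<le> n \<Longrightarrow> 1 \<le> m \<Longrightarrow> PP (Lw (Suc m) * gS m * Rw (Suc m))"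
proof (induction "n - Suc m" arbitrary: m)
  case 0
  then have mn: "Suc m = n" by simp
  have P1: "PP (gS (n - 1))" by (rule PP_Sgen) (use 0 mn in simp)
  have E1: "m = n - 1" using mn by simp
  have E2: "Lw (Suc m) * gS m * Rw (Suc m) = gS m" unfolding mn by simp
  have "PP (gS m)" using P1 E1 by simp
  then show ?case unfolding E2 .
next
  case (Suc k)
  then have m2: "Suc (Suc m) \<le> n" by simp
  have IH: "PP (Lw (Suc (Suc m)) * gS (Suc m) * Rw (Suc (Suc m)))"
    by (rule Suc.hyps) (use Suc in simp_all)
  let ?L = "Lw (Suc (Suc m))" and ?R = "Rw (Suc (Suc m))"
  have cL: "CM n (gS m) ?L"
    by (rule CM_Lw) (use Suc m2 in \<open>auto intro: CM_SS\<close>)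
  have cR: "CM n (gS m) ?R"
    by (rule CM_Rw) (use Suc m2 in \<open>auto intro: CM_SS\<close>)
  have "Lw (Suc m) * gS m * Rw (Suc m) = ?L * (gS (Suc m) * gS m * gS (Suc m)) * ?R"
    using m2 by (simp add: Lw_step Rw_step mult.assoc)
  also have "QQ n (?L * (gS (Suc m) * gS m * gS (Suc m)) * ?R) (?L * (gS m * gS (Suc m) * gS m) * ?R)"
    by (rule Q_ctx[OF Q_sym[OF qbraid[of m n]]]) (use Suc m2 in simp_all)
  also have "?L * (gS m * gS (Suc m) * gS m) * ?R = (?L * gS m) * gS (Suc m) * (gS m * ?R)"
    by (simp add: mult.assoc)
  also have "QQ n ((?L * gS m) * gS (Suc m) * (gS m * ?R)) ((gS m * ?L) * gS (Suc m) * (?R * gS m))"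
    by (intro Q_mult Q_refl Q_sym[OF cL[unfolded CM_def]] cR[unfolded CM_def]) (use m2 in simp)
  also have "(gS m * ?L) * gS (Suc m) * (?R * gS m) = gS m * (?L * gS (Suc m) * ?R) * gS m"
    by (simp add: mult.assoc)
  finally have e: "QQ n (Lw (Suc m) * gS m * Rw (Suc m)) (gS m * (?L * gS (Suc m) * ?R) * gS m)" .
  have "PP (gS m * (?L * gS (Suc m) * ?R) * gS m)"
    by (intro PP_S_right PP_S_left IH) (use Suc m2 in simp_all)
  then show ?case by (rule PP_eq[OF e])
qed

definition Phi where "Phi m p = Lw m * p * Rw m"

lemma Phi_n[simp]: "Phi n p = p" by (simp add: Phi_def)
lemma Phi_step: "m < n \<Longrightarrow> Phi m p = Phi (Suc m) (gS m * p * gS m)"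
  by (simp add: Phi_def Lw_step Rw_step mult.assoc)
lemma Phi_add: "Phi m (p + q) = Phi m p + Phi m q"
  by (simp add: Phi_def algebra_simps)
lemma Phi_diff: "Phi m (p - q) = Phi m p - Phi m q"
  by (simp add: Phi_def algebra_simps)
lemma Phi_uminus: "Phi m (- p) = - Phi m p"
  by (simp add: Phi_def algebra_simps)
lemma Phi_sum: "Phi m (sum f SS) = (\<Sum>x\<in>SS. Phi m (f x))"
  by (simp add: Phi_def sum_distrib_left sum_distrib_right)
lemma Phi_fscal: "Phi m (fscal c * (p::('a,'k) qfree)) = fscal c * Phi m p"
  by (simp add: Phi_def mult.assoc fs1)
lemma Phi_V[simp]: "1 \<le> m \<Longrightarrow> p \<in> Vn n \<Longrightarrow> Phi m p \<in> Vn n"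
  by (simp add: Phi_def)
lemma Phi_cong: "1 \<le> m \<Longrightarrow> QQ n p q \<Longrightarrow> QQ n (Phi m p) (Phi m q)"
  unfolding Phi_def by (rule Q_ctx) simp_all

lemma Phi_pull: assumes m: "1 \<le> m" and W: "W \<in> Vn n"
  and u: "QQ n (Lw m * u) (u' * Lw m)" and v: "QQ n (v * Rw m) (Rw m * v')"
  shows "QQ n (Phi m (u * W * v)) (u' * Phi m W * v')"
proof -
  have "Phi m (u * W * v) = (Lw m * u) * W * (v * Rw m)" by (simp add: Phi_def mult.assoc)
  also have "QQ n ((Lw m * u) * W * (v * Rw m)) ((u' * Lw m) * W * (Rw m * v'))"
    by (rule Q_mult[OF Q_mult[OF u Q_refl[OF W]] v])
  also have "(u' * Lw m) * W * (Rw m * v') = u' * Phi m W * v'" by (simp add: Phi_def mult.assoc)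
  finally show ?thesis .
qed

lemma CM_QL: "CM n g (Lw m) \<Longrightarrow> QQ n (Lw m * g) (g * Lw m)"
  unfolding CM_def by (rule Q_sym)
lemma CM_QR: "CM n g (Rw m) \<Longrightarrow> QQ n (g * Rw m) (Rw m * g)"
  unfolding CM_def .

lemma CMlow_X: "1 \<le> m \<Longrightarrow> m < n \<Longrightarrow> CM n (gX m ^ c) (Lw (Suc m)) \<and> CM n (gX m ^ c) (Rw (Suc m))"
proof -
  assume m: "1 \<le> m" "m < n"
  have h: "\<And>j. Suc m \<le> j \<Longrightarrow> j < n \<Longrightarrow> CM n (gX m ^ c) (gS j)"
    by (rule CM_powL) (use m in \<open>auto intro!: CM_sym[OF CM_SX]\<close>)
  show ?thesis using m by (auto intro!: CM_Lw CM_Rw h)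
qed
lemma CMlow_E: "1 \<le> m \<Longrightarrow> m < n \<Longrightarrow> CM n (gE m a) (Lw (Suc m)) \<and> CM n (gE m a) (Rw (Suc m))"
proof -
  assume m: "1 \<le> m" "m < n"
  have h: "\<And>j. Suc m \<le> j \<Longrightarrow> j < n \<Longrightarrow> CM n (gE m a) (gS j)"
    using m by (auto intro!: CM_sym[OF CM_SE])
  show ?thesis using m by (auto intro!: CM_Lw CM_Rw h)
qed

end

lemma pw_assoc: "(a::'r::monoid_mult) ^ k * (a * b) = a * (a ^ k * b)"
  by (simp add: mult.assoc[symmetric] power_commutes)

lemma sum_shift:
  fixes X Tt Y :: "'r::ring_1"
  shows "(\<Sum>a<d. X ^ a * Tt * Y ^ (d - a)) * Y + X ^ d * Tt * Y = (\<Sum>a<Suc d. X ^ a * Tt * Y ^ (Suc d - a))"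
proof -
  have "(\<Sum>a<d. X ^ a * Tt * Y ^ (Suc d - a)) = (\<Sum>a<d. X ^ a * Tt * Y ^ (d - a) * Y)"
    by (rule sum.cong) (auto simp: Suc_diff_le power_commutes mult.assoc pw_assoc)
  then show ?thesis by (simp add: sum_distrib_right)
qed

context qctx
begin

lemma R1: assumes m: "1 \<le> m" "m < n"
  shows "QQ n (gS m * gX (Suc m)) (gX m * gS m + fscal z * tau B dual m * gX (Suc m))"
proof -
  have "QQ n (gS m * gX (Suc m)) (gS m * (gS m * gX m * gS m))"
    by (rule Q_multL[OF _ Q_sym[OF qSXS[of m n]]]) (use m in simp_all)
  also have "gS m * (gS m * gX m * gS m) = (gS m * gS m) * (gX m * gS m)" by (simp add: mult.assoc)
  also have "QQ n ((gS m * gS m) * (gX m * gS m)) ((fscal z * tau B dual m * gS m + 1) * (gX m * gS m))"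
    by (rule Q_multR[OF _ qsq[of m n]]) (use m in simp_all)
  also have "(fscal z * tau B dual m * gS m + 1) * (gX m * gS m) = fscal z * tau B dual m * (gS m * gX m * gS m) + gX m * gS m"
    by (simp add: algebra_simps)
  also have "QQ n (fscal z * tau B dual m * (gS m * gX m * gS m) + gX m * gS m) (fscal z * tau B dual m * gX (Suc m) + gX m * gS m)"
    by (rule Q_addR[OF _ Q_multL[OF _ qSXS[of m n]]]) (use m in simp_all)
  also have "fscal z * tau B dual m * gX (Suc m) + gX m * gS m = gX m * gS m + fscal z * tau B dual m * gX (Suc m)"
    by (simp add: add.commute)
  finally show ?thesis .
qed

lemma R2: assumes m: "1 \<le> m" "m < n"
  shows "QQ n (gS m * gX (Suc m) ^ d) (gX m ^ d * gS m + fscal z * (\<Sum>a<d. gX m ^ a * tau B dual m * gX (Suc m) ^ (d - a)))"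
proof (induction d)
  case 0 show ?case using m by (simp add: Q_refl)
next
  case (Suc d)
  let ?S = "\<Sum>a<d. gX m ^ a * tau B dual m * gX (Suc m) ^ (d - a)"
  have "gS m * gX (Suc m) ^ Suc d = (gS m * gX (Suc m) ^ d) * gX (Suc m)" by (simp add: power_commutes mult.assoc pw_assoc)
  also have "QQ n ((gS m * gX (Suc m) ^ d) * gX (Suc m)) ((gX m ^ d * gS m + fscal z * ?S) * gX (Suc m))"
    by (rule Q_multR[OF _ Suc.IH]) (use m in simp)
  also have "(gX m ^ d * gS m + fscal z * ?S) * gX (Suc m) = gX m ^ d * (gS m * gX (Suc m)) + fscal z * (?S * gX (Suc m))"
    by (simp add: algebra_simps)
  also have "QQ n (gX m ^ d * (gS m * gX (Suc m)) + fscal z * (?S * gX (Suc m)))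
      (gX m ^ d * (gX m * gS m + fscal z * tau B dual m * gX (Suc m)) + fscal z * (?S * gX (Suc m)))"
    by (rule Q_addR[OF _ Q_multL[OF _ R1[OF m]]]) (use m in simp_all)
  also have "gX m ^ d * (gX m * gS m + fscal z * tau B dual m * gX (Suc m)) + fscal z * (?S * gX (Suc m))
      = gX m ^ Suc d * gS m + fscal z * (?S * gX (Suc m) + gX m ^ d * tau B dual m * gX (Suc m))"
    by (simp add: algebra_simps pw_assoc fs1)
  also have "?S * gX (Suc m) + gX m ^ d * tau B dual m * gX (Suc m) = (\<Sum>a<Suc d. gX m ^ a * tau B dual m * gX (Suc m) ^ (Suc d - a))"
    by (rule sum_shift)
  finally show ?case .
qed

lemma R3: assumes m: "1 \<le> m" "m < n"
  shows "QQ n (gX (Suc m) ^ Suc d) (gS m * gX m ^ Suc d * gS m + fscal z * (\<Sum>a<d. gS m * gX m ^ Suc a * tau B dual m * gX (Suc m) ^ (d - a)))"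
proof -
  let ?S = "\<Sum>a<d. gX m ^ a * tau B dual m * gX (Suc m) ^ (d - a)"
  have "gX (Suc m) ^ Suc d = gX (Suc m) * gX (Suc m) ^ d" by simp
  also have "QQ n (gX (Suc m) * gX (Suc m) ^ d) ((gS m * gX m * gS m) * gX (Suc m) ^ d)"
    by (rule Q_multR[OF _ Q_sym[OF qSXS[of m n]]]) (use m in simp_all)
  also have "(gS m * gX m * gS m) * gX (Suc m) ^ d = (gS m * gX m) * (gS m * gX (Suc m) ^ d)" by (simp add: mult.assoc)
  also have "QQ n ((gS m * gX m) * (gS m * gX (Suc m) ^ d)) ((gS m * gX m) * (gX m ^ d * gS m + fscal z * ?S))"
    by (rule Q_multL[OF _ R2[OF m]]) (use m in simp)
  also have "(gS m * gX m) * (gX m ^ d * gS m + fscal z * ?S) = gS m * gX m ^ Suc d * gS m + fscal z * (gS m * gX m * ?S)"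
    by (simp add: algebra_simps fs1)
  also have "gS m * gX m * ?S = (\<Sum>a<d. gS m * gX m ^ Suc a * tau B dual m * gX (Suc m) ^ (d - a))"
    by (simp add: sum_distrib_left mult.assoc)
  finally show ?thesis .
qed

end

context qctx
begin

lemma CMlow_XE: "1 \<le> m \<Longrightarrow> m < n \<Longrightarrow> CM n (gX m ^ k * gE m a) (Lw (Suc m)) \<and> CM n (gX m ^ k * gE m a) (Rw (Suc m))"
  using CMlow_X[of m k] CMlow_E[of m a] by (auto intro!: CM_multL)

lemma lemC_A: assumes m: "1 \<le> m" "m < n"
  shows "PP (Phi (Suc m) (gX m ^ d * gS m * gX m ^ c * tau B dual m))"
proof -
  have each: "PP (Phi (Suc m) (gX m ^ d * gS m * gX m ^ c * (gE (Suc m) b * gE m (dual b))))" for b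
  proof -
    have c1: "QQ n (gX m ^ c * gE (Suc m) b) (gE (Suc m) b * gX m ^ c)"
      using CM_powL[OF _ _ CM_XE[of m n "Suc m" b], of c] m unfolding CM_def by simp
    have c2: "QQ n (gS m * gE (Suc m) b) (gE m b * gS m)" by (rule qSE2) (use m in simp_all)
    have "gX m ^ d * gS m * gX m ^ c * (gE (Suc m) b * gE m (dual b)) = (gX m ^ d * gS m) * (gX m ^ c * gE (Suc m) b) * gE m (dual b)"
      by (simp add: mult.assoc)
    also have "QQ n ((gX m ^ d * gS m) * (gX m ^ c * gE (Suc m) b) * gE m (dual b)) ((gX m ^ d * gS m) * (gE (Suc m) b * gX m ^ c) * gE m (dual b))"
      by (rule Q_ctx[OF c1]) (use m in simp_all)
    also have "(gX m ^ d * gS m) * (gE (Suc m) b * gX m ^ c) * gE m (dual b) = gX m ^ d * (gS m * gE (Suc m) b) * (gX m ^ c * gE m (dual b))"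
      by (simp add: mult.assoc)
    also have "QQ n (gX m ^ d * (gS m * gE (Suc m) b) * (gX m ^ c * gE m (dual b))) (gX m ^ d * (gE m b * gS m) * (gX m ^ c * gE m (dual b)))"
      by (rule Q_ctx[OF c2]) (use m in simp_all)
    also have "gX m ^ d * (gE m b * gS m) * (gX m ^ c * gE m (dual b)) = (gX m ^ d * gE m b) * gS m * (gX m ^ c * gE m (dual b))"
      by (simp add: mult.assoc)
    finally have e1: "QQ n (gX m ^ d * gS m * gX m ^ c * (gE (Suc m) b * gE m (dual b))) ((gX m ^ d * gE m b) * gS m * (gX m ^ c * gE m (dual b)))" .
    have e2: "QQ n (Phi (Suc m) ((gX m ^ d * gE m b) * gS m * (gX m ^ c * gE m (dual b))))
        ((gX m ^ d * gE m b) * Phi (Suc m) (gS m) * (gX m ^ c * gE m (dual b)))"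
    proof (rule Phi_pull)
      show "QQ n (Lw (Suc m) * (gX m ^ d * gE m b)) ((gX m ^ d * gE m b) * Lw (Suc m))"
        by (rule CM_QL) (use CMlow_XE[OF m] in blast)
      show "QQ n ((gX m ^ c * gE m (dual b)) * Rw (Suc m)) (Rw (Suc m) * (gX m ^ c * gE m (dual b)))"
        by (rule CM_QR) (use CMlow_XE[OF m] in blast)
    qed (use m in simp_all)
    have "PP (Phi (Suc m) (gS m))" using braidP[of m] m by (simp add: Phi_def)
    then have "PP (gX m ^ d * (gE m b * ((Phi (Suc m) (gS m) * gX m ^ c) * gE m (dual b))))"
      by (intro PP_X_left[OF m] PP_E_left[OF m] PP_E_right[OF m] PP_X_right[OF m])
    then have "PP ((gX m ^ d * gE m b) * Phi (Suc m) (gS m) * (gX m ^ c * gE m (dual b)))"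
      by (simp add: mult.assoc)
    then have "PP (Phi (Suc m) ((gX m ^ d * gE m b) * gS m * (gX m ^ c * gE m (dual b))))"
      by (rule PP_eq[OF e2])
    then show ?thesis by (rule PP_eq[OF Phi_cong[OF le_SucI[OF m(1)] e1]])
  qed
  have "(gX m ^ d :: ('a,'k) qfree) * gS m * gX m ^ c * tau B dual m = (\<Sum>b\<in>B. gX m ^ d * gS m * gX m ^ c * (gE (Suc m) b * gE m (dual b)))"
    by (simp add: tau_def sum_distrib_left)
  then show ?thesis by (simp add: Phi_sum PP_sum each)
qed

lemma lemC_B: assumes m: "1 \<le> m" "m < n" and hyp: "PP (Phi (Suc m) (gX (Suc m) ^ e))"
  shows "PP (Phi (Suc m) (gX m ^ a * tau B dual m * gX (Suc m) ^ e * (gX m ^ c * tau B dual m)))"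
proof -
  let ?t = "tau B dual m" and ?Y = "gX (Suc m) ^ e"
  have c1: "QQ n (gX m ^ c * ?t) (?t * gX m ^ c)"
    using CM_powL[OF _ _ CM_X_tau[of m n m], of c] m unfolding CM_def by simp
  have "QQ n (gX m ^ a * ?t * ?Y * (gX m ^ c * ?t)) (gX m ^ a * ?t * ?Y * (?t * gX m ^ c))"
    by (rule Q_multL[OF _ c1]) (use m in simp)
  also have "gX m ^ a * ?t * ?Y * (?t * gX m ^ c) = gX m ^ a * (?t * ?Y * ?t) * gX m ^ c"
    by (simp add: mult.assoc)
  finally have e1: "QQ n (gX m ^ a * ?t * ?Y * (gX m ^ c * ?t)) (gX m ^ a * (?t * ?Y * ?t) * gX m ^ c)" .
  have e2: "QQ n (Phi (Suc m) (gX m ^ a * (?t * ?Y * ?t) * gX m ^ c)) (gX m ^ a * Phi (Suc m) (?t * ?Y * ?t) * gX m ^ c)"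
  proof (rule Phi_pull)
    show "QQ n (Lw (Suc m) * gX m ^ a) (gX m ^ a * Lw (Suc m))"
      by (rule CM_QL) (use CMlow_X[OF m] in blast)
    show "QQ n (gX m ^ c * Rw (Suc m)) (Rw (Suc m) * gX m ^ c)"
      by (rule CM_QR) (use CMlow_X[OF m] in blast)
  qed (use m in simp_all)
  have each: "PP (Phi (Suc m) (gE (Suc m) b * (gE m (dual b) * ?Y * gE (Suc m) b') * gE m (dual b')))" for b b'
  proof -
    have f1: "QQ n (Phi (Suc m) (gE (Suc m) b * (gE m (dual b) * ?Y * gE (Suc m) b') * gE m (dual b')))
        (gE n b * Phi (Suc m) (gE m (dual b) * ?Y * gE (Suc m) b') * gE m (dual b'))"
    proof (rule Phi_pull)
      show "QQ n (Lw (Suc m) * gE (Suc m) b) (gE n b * Lw (Suc m))" by (rule shiftL) (use m in simp_all)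
      show "QQ n (gE m (dual b') * Rw (Suc m)) (Rw (Suc m) * gE m (dual b'))"
        by (rule CM_QR) (use CMlow_E[OF m] in blast)
    qed (use m in simp_all)
    have f2: "QQ n (Phi (Suc m) (gE m (dual b) * ?Y * gE (Suc m) b')) (gE m (dual b) * Phi (Suc m) ?Y * gE n b')"
    proof (rule Phi_pull)
      show "QQ n (Lw (Suc m) * gE m (dual b)) (gE m (dual b) * Lw (Suc m))"
        by (rule CM_QL) (use CMlow_E[OF m] in blast)
      show "QQ n (gE (Suc m) b' * Rw (Suc m)) (Rw (Suc m) * gE n b')" by (rule shiftR) (use m in simp_all)
    qed (use m in simp_all)
    have f3: "QQ n (gE n b * Phi (Suc m) (gE m (dual b) * ?Y * gE (Suc m) b') * gE m (dual b'))
        (gE n b * (gE m (dual b) * Phi (Suc m) ?Y * gE n b') * gE m (dual b'))"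
      by (rule Q_ctx[OF f2]) (use m in simp_all)
    have "PP (gE n b * (gE m (dual b) * ((Phi (Suc m) ?Y * gE n b') * gE m (dual b'))))"
      by (rule PP_En_left[OF PP_E_left[OF m PP_E_right[OF m PP_En_right[OF hyp]]]])
    then have "PP (gE n b * (gE m (dual b) * Phi (Suc m) ?Y * gE n b') * gE m (dual b'))"
      by (simp add: mult.assoc)
    then show ?thesis by (rule PP_eq[OF Q_trans[OF f1 f3]])
  qed
  have "(?t :: ('a,'k) qfree) * ?Y * ?t = (\<Sum>b\<in>B. \<Sum>b'\<in>B. gE (Suc m) b * (gE m (dual b) * ?Y * gE (Suc m) b') * gE m (dual b'))"
    by (simp add: tau_def sum_distrib_left sum_distrib_right mult.assoc) (rule sum.swap)
  then have "PP (Phi (Suc m) (?t * ?Y * ?t))" by (simp add: Phi_sum PP_sum each)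
  then have "PP (gX m ^ a * Phi (Suc m) (?t * ?Y * ?t) * gX m ^ c)"
    by (intro PP_X_left[OF m] PP_X_right[OF m])
  then have "PP (Phi (Suc m) (gX m ^ a * (?t * ?Y * ?t) * gX m ^ c))" by (rule PP_eq[OF e2])
  then show ?thesis by (rule PP_eq[OF Phi_cong[OF le_SucI[OF m(1)] e1]])
qed

end

context qctx
begin

lemma lemC: assumes m: "1 \<le> m" "m < n" and d: "1 \<le> d"
  and hyp: "\<And>e. 1 \<le> e \<Longrightarrow> e \<le> d \<Longrightarrow> PP (Phi (Suc m) (gX (Suc m) ^ e))"
  shows "PP (Phi (Suc m) (gS m * gX m ^ c * tau B dual m * gX (Suc m) ^ d))"
proof -
  let ?s = "gS m" and ?x = "gX m" and ?y = "gX (Suc m)" and ?t = "tau B dual m"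
  let ?S = "\<Sum>a<d. ?x ^ a * ?t * ?y ^ (d - a)"
  have c1: "QQ n (?t * ?y ^ d) (?y ^ d * ?t)"
    using CM_powL[OF _ _ CM_X_tau[of "Suc m" n m], of d] m unfolding CM_def by (simp add: Q_sym)
  have c2: "QQ n (?x ^ c * ?y ^ d) (?y ^ d * ?x ^ c)"
    using CM_powL[OF _ _ CM_powR[OF _ _ CM_XX[of m n "Suc m"]], of d c] m unfolding CM_def by simp
  have "?s * ?x ^ c * ?t * ?y ^ d = (?s * ?x ^ c) * (?t * ?y ^ d)" by (simp add: mult.assoc)
  also have "QQ n ((?s * ?x ^ c) * (?t * ?y ^ d)) ((?s * ?x ^ c) * (?y ^ d * ?t))"
    by (rule Q_multL[OF _ c1]) (use m in simp)
  also have "(?s * ?x ^ c) * (?y ^ d * ?t) = ?s * (?x ^ c * ?y ^ d) * ?t" by (simp add: mult.assoc)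
  also have "QQ n (?s * (?x ^ c * ?y ^ d) * ?t) (?s * (?y ^ d * ?x ^ c) * ?t)"
    by (rule Q_ctx[OF c2]) (use m in simp_all)
  also have "?s * (?y ^ d * ?x ^ c) * ?t = (?s * ?y ^ d) * (?x ^ c * ?t)" by (simp add: mult.assoc)
  also have "QQ n ((?s * ?y ^ d) * (?x ^ c * ?t)) ((?x ^ d * ?s + fscal z * ?S) * (?x ^ c * ?t))"
    by (rule Q_multR[OF _ R2[OF m]]) (use m in simp)
  also have "(?x ^ d * ?s + fscal z * ?S) * (?x ^ c * ?t) =
      ?x ^ d * ?s * ?x ^ c * ?t + fscal z * (\<Sum>a<d. ?x ^ a * ?t * ?y ^ (d - a) * (?x ^ c * ?t))"
    by (simp add: algebra_simps sum_distrib_right)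
  finally have e: "QQ n (?s * ?x ^ c * ?t * ?y ^ d)
      (?x ^ d * ?s * ?x ^ c * ?t + fscal z * (\<Sum>a<d. ?x ^ a * ?t * ?y ^ (d - a) * (?x ^ c * ?t)))" .
  have "PP (Phi (Suc m) (?x ^ d * ?s * ?x ^ c * ?t + fscal z * (\<Sum>a<d. ?x ^ a * ?t * ?y ^ (d - a) * (?x ^ c * ?t))))"
    unfolding Phi_add Phi_fscal Phi_sum
  proof (intro PP_add PP_fscal PP_sum)
    show "PP (Phi (Suc m) (?x ^ d * ?s * ?x ^ c * ?t))" by (rule lemC_A[OF m])
    fix a assume "a \<in> {..<d}"
    then have a: "1 \<le> d - a" "d - a \<le> d" by auto
    show "PP (Phi (Suc m) (?x ^ a * ?t * ?y ^ (d - a) * (?x ^ c * ?t)))"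
      by (rule lemC_B[OF m hyp[OF a]])
  qed
  then show ?thesis by (rule PP_eq[OF Phi_cong[OF le_SucI[OF m(1)] e]])
qed

lemma lemD: assumes m: "1 \<le> m" "m < n"
  and hyp: "\<And>e. 1 \<le> e \<Longrightarrow> e \<le> d \<Longrightarrow> PP (Phi (Suc m) (gX (Suc m) ^ e))"
  shows "PP (Phi (Suc m) (gX (Suc m) ^ Suc d - gS m * gX m ^ Suc d * gS m))"
proof -
  let ?S = "\<Sum>a<d. gS m * gX m ^ Suc a * tau B dual m * gX (Suc m) ^ (d - a)"
  have "QQ n (gX (Suc m) ^ Suc d - gS m * gX m ^ Suc d * gS m)
      (gS m * gX m ^ Suc d * gS m + fscal z * ?S - gS m * gX m ^ Suc d * gS m)"
    by (rule Q_diff[OF R3[OF m] Q_refl]) (use m in simp)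
  then have e: "QQ n (gX (Suc m) ^ Suc d - gS m * gX m ^ Suc d * gS m) (fscal z * ?S)" by simp
  have "PP (Phi (Suc m) (fscal z * ?S))"
    unfolding Phi_fscal Phi_sum
  proof (intro PP_fscal PP_sum)
    fix a assume "a \<in> {..<d}"
    then have a: "1 \<le> d - a" by auto
    show "PP (Phi (Suc m) (gS m * gX m ^ Suc a * tau B dual m * gX (Suc m) ^ (d - a)))"
      by (rule lemC[OF m a]) (rule hyp; simp)
  qed
  then show ?thesis by (rule PP_eq[OF Phi_cong[OF le_SucI[OF m(1)] e]])
qed

lemma PE: "e < l \<Longrightarrow> 1 \<le> e \<Longrightarrow> j \<le> n \<Longrightarrow> 1 \<le> j \<Longrightarrow> PP (Phi j (gX j ^ e))"
proof (induction e arbitrary: j rule: less_induct)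
  case (less e)
  obtain d where ed: "e = Suc d" using less.prems(2) by (cases e) auto
  show ?case using less.prems(3,4)
  proof (induction j rule: inc_induct)
    case base then show ?case using PP_Xgen less.prems by simp
  next
    case (step j)
    have m: "1 \<le> j" "j < n" using step by auto
    have IH: "PP (Phi (Suc j) (gX (Suc j) ^ e))" using step.IH by simp
    have D: "PP (Phi (Suc j) (gX (Suc j) ^ Suc d - gS j * gX j ^ Suc d * gS j))"
    proof (rule lemD[OF m])
      fix e' assume "1 \<le> e'" "e' \<le> d"
      then show "PP (Phi (Suc j) (gX (Suc j) ^ e'))"
        by (intro less.IH) (use ed less.prems m in auto)
    qed
    have eq: "Phi j (gX j ^ e :: ('a,'k) qfree) = Phi (Suc j) (gX (Suc j) ^ e) - Phi (Suc j) (gX (Suc j) ^ Suc d - gS j * gX j ^ Suc d * gS j)"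
      using m by (simp add: Phi_step Phi_diff ed)
    show ?case unfolding eq by (rule PP_diff[OF IH D])
  qed
qed

end

context qctx
begin

lemma Phi_pullE: assumes m: "1 \<le> m" "m < n" and W: "W \<in> Vn n"
  shows "QQ n (Phi (Suc m) (gE (Suc m) c * W)) (gE n c * Phi (Suc m) W)"
proof -
  have "QQ n (Phi (Suc m) (gE (Suc m) c * W * 1)) (gE n c * Phi (Suc m) W * 1)"
  proof (rule Phi_pull[OF _ W])
    show "QQ n (Lw (Suc m) * gE (Suc m) c) (gE n c * Lw (Suc m))" by (rule shiftL) (use m in simp_all)
    show "QQ n (1 * Rw (Suc m)) (Rw (Suc m) * 1)" by (simp add: Q_refl)
  qed simp
  then show ?thesis by simp
qed

lemma key0: assumes m: "1 \<le> m" "m < n"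
  shows "PP (Phi (Suc m) (1 - gS m * gS m))"
proof -
  have "QQ n (1 - gS m * gS m) (1 - (fscal z * tau B dual m * gS m + 1))"
    by (rule Q_diff[OF Q_refl qsq]) (use m in simp_all)
  then have e: "QQ n (1 - gS m * gS m) (- (fscal z * (\<Sum>b\<in>B. gE (Suc m) b * (gE m (dual b) * gS m))))"
    by (simp add: tau_def sum_distrib_right mult.assoc)
  have each: "PP (Phi (Suc m) (gE (Suc m) b * (gE m (dual b) * gS m)))" for b
  proof -
    have f1: "QQ n (Phi (Suc m) (gE (Suc m) b * (gE m (dual b) * gS m))) (gE n b * Phi (Suc m) (gE m (dual b) * gS m))"
      by (rule Phi_pullE[OF m]) (use m in simp)
    have f2: "QQ n (Phi (Suc m) (gE m (dual b) * gS m * 1)) (gE m (dual b) * Phi (Suc m) (gS m) * 1)"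
    proof (rule Phi_pull)
      show "QQ n (Lw (Suc m) * gE m (dual b)) (gE m (dual b) * Lw (Suc m))"
        by (rule CM_QL) (use CMlow_E[OF m] in blast)
      show "QQ n (1 * Rw (Suc m)) (Rw (Suc m) * 1)" by (simp add: Q_refl)
    qed (use m in simp_all)
    have f3: "QQ n (gE n b * Phi (Suc m) (gE m (dual b) * gS m)) (gE n b * (gE m (dual b) * Phi (Suc m) (gS m)))"
      by (rule Q_multL) (use f2 n1 in simp_all)
    have "PP (Phi (Suc m) (gS m))" using braidP[of m] m by (simp add: Phi_def)
    then have "PP (gE n b * (gE m (dual b) * Phi (Suc m) (gS m)))"
      by (rule PP_En_left[OF PP_E_left[OF m]])
    then show ?thesis by (rule PP_eq[OF Q_trans[OF f1 f3]])
  qed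
  have "PP (Phi (Suc m) (- (fscal z * (\<Sum>b\<in>B. gE (Suc m) b * (gE m (dual b) * gS m)))))"
    unfolding Phi_uminus Phi_fscal Phi_sum by (intro PP_uminus PP_fscal PP_sum each)
  then show ?thesis by (rule PP_eq[OF Phi_cong[OF le_SucI[OF m(1)] e]])
qed

lemma keyk: assumes m: "1 \<le> m" "m < n" and k: "k \<le> l"
  shows "PP (Phi (Suc m) (gX (Suc m) ^ k - gS m * gX m ^ k * gS m))"
proof (cases k)
  case 0 then show ?thesis using key0[OF m] by simp
next
  case (Suc d)
  show ?thesis unfolding Suc
  proof (rule lemD[OF m])
    fix e assume "1 \<le> e" "e \<le> d"
    then show "PP (Phi (Suc m) (gX (Suc m) ^ e))"
      by (intro PE) (use Suc k m in auto)
  qed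
qed

lemma MainQ: "m \<le> n \<Longrightarrow> 1 \<le> m \<Longrightarrow> PP (Phi m (fpoly fc l m))"
proof (induction m)
  case 0 then show ?case by simp
next
  case (Suc m)
  show ?case
  proof (cases "m = 0")
    case True
    have "fpoly fc l 1 \<in> qwa_ideal sc A0 A1 B dual z fc l n"
      unfolding qwa_ideal_def by (rule ideal_gen.gen) (use n1 in simp)
    then have "Phi 1 (fpoly fc l 1) \<in> qwa_ideal sc A0 A1 B dual z fc l n"
      unfolding Phi_def by (intro I_left I_right) simp_all
    then have "QQ n (Phi 1 (fpoly fc l 1)) 0" by (intro Q_I) (use n1 in simp)
    then have "PP (Phi 1 (fpoly fc l 1))" by (rule PP_eq) (rule PP_0)
    then show ?thesis using True by simp
  next
    case False
    then have m: "1 \<le> m" "m < n" using Suc.prems by auto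
    have IH: "PP (Phi m (fpoly fc l m))" using Suc m by simp
    let ?s = "gS m" and ?x = "gX m" and ?y = "gX (Suc m)"
    let ?D = "fpoly fc l (Suc m) - ?s * fpoly fc l m * ?s"
    have split: "Phi (Suc m) (fpoly fc l (Suc m)) = Phi m (fpoly fc l m) + Phi (Suc m) ?D"
      using m by (simp add: Phi_step Phi_diff)
    have Deq: "?D = (\<Sum>j\<le>l. gE (Suc m) (fc j) * ?y ^ (l - j) - ?s * (gE m (fc j) * ?x ^ (l - j)) * ?s)"
      by (simp add: fpoly_def sum_distrib_left sum_distrib_right sum_subtractf)
    have trm: "QQ n (gE (Suc m) (fc j) * ?y ^ (l - j) - ?s * (gE m (fc j) * ?x ^ (l - j)) * ?s)
        (gE (Suc m) (fc j) * (?y ^ (l - j) - ?s * ?x ^ (l - j) * ?s))" for j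
    proof -
      have "?s * (gE m (fc j) * ?x ^ (l - j)) * ?s = (?s * gE m (fc j)) * (?x ^ (l - j) * ?s)" by (simp add: mult.assoc)
      also have "QQ n ((?s * gE m (fc j)) * (?x ^ (l - j) * ?s)) ((gE (Suc m) (fc j) * ?s) * (?x ^ (l - j) * ?s))"
        by (rule Q_multR[OF _ qSE1]) (use m in simp_all)
      also have "(gE (Suc m) (fc j) * ?s) * (?x ^ (l - j) * ?s) = gE (Suc m) (fc j) * (?s * ?x ^ (l - j) * ?s)"
        by (simp add: mult.assoc)
      finally have q: "QQ n (?s * (gE m (fc j) * ?x ^ (l - j)) * ?s) (gE (Suc m) (fc j) * (?s * ?x ^ (l - j) * ?s))" .
      have "QQ n (gE (Suc m) (fc j) * ?y ^ (l - j) - ?s * (gE m (fc j) * ?x ^ (l - j)) * ?s)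
          (gE (Suc m) (fc j) * ?y ^ (l - j) - gE (Suc m) (fc j) * (?s * ?x ^ (l - j) * ?s))"
        by (rule Q_diff[OF Q_refl q]) (use m in simp)
      then show ?thesis by (simp add: right_diff_distrib)
    qed
    have "PP (Phi (Suc m) (\<Sum>j\<le>l. gE (Suc m) (fc j) * (?y ^ (l - j) - ?s * ?x ^ (l - j) * ?s)))"
      unfolding Phi_sum
    proof (rule PP_sum)
      fix j assume "j \<in> {..l}"
      have W: "?y ^ (l - j) - ?s * ?x ^ (l - j) * ?s \<in> Vn n" using m by simp
      have "PP (gE n (fc j) * Phi (Suc m) (?y ^ (l - j) - ?s * ?x ^ (l - j) * ?s))"
        by (rule PP_En_left[OF keyk[OF m]]) simp
      then show "PP (Phi (Suc m) (gE (Suc m) (fc j) * (?y ^ (l - j) - ?s * ?x ^ (l - j) * ?s)))"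
        by (rule PP_eq[OF Phi_pullE[OF m W]])
    qed
    moreover have "QQ n (Phi (Suc m) ?D) (Phi (Suc m) (\<Sum>j\<le>l. gE (Suc m) (fc j) * (?y ^ (l - j) - ?s * ?x ^ (l - j) * ?s)))"
      unfolding Deq by (rule Phi_cong[OF le_SucI[OF m(1)] Q_sum[OF trm]])
    ultimately have "PP (Phi (Suc m) ?D)" by (rule PP_eq[rotated])
    then show ?thesis unfolding split by (rule PP_add[OF IH])
  qed
qed

lemma final: "QQ (n - 1) (T (fpoly fc l n)) 0"
  using PP_T[OF MainQ[of n]] n1 by simp

end

theorem lemma6p1:
  fixes sc :: "'k::comm_ring_1 \<Rightarrow> 'a::ring_1 \<Rightarrow> 'a"
    and A0 A1 B :: "'a set" and tr :: "'a \<Rightarrow> 'k" and dual :: "'a \<Rightarrow> 'a"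
    and z t :: 'k and fc :: "nat \<Rightarrow> 'a" and l n :: nat
    and T :: "('a, 'k) qfree \<Rightarrow> ('a, 'k) qfree"
  assumes A: "sym_frob_superalg sc A0 A1 tr B dual"
    and z: "z dvd 1" and t: "t dvd 1"
    and fcent: "\<forall>j\<le>l. even_supercentral A0 (fc j)"
    and f0: "fc 0 = 1" and fl: "fc l = sc (t ^ 2) 1"
    and n: "1 \<le> n"
    and T: "is_qwa_trace sc A0 A1 tr B dual z fc l n T"
  shows "qwa_eq sc A0 A1 B dual z fc l (n - 1) (T (fpoly fc l n)) 0"
proof -
  interpret qctx sc A0 A1 tr B dual z fc l n T
    by unfold_locales (rule A, rule n, rule T)
  show ?thesis using final unfolding EQ_def .
qed

end
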